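(* Let $p$ be an odd prime. Every nilpotent matrix $A\in\mathfrak{gl}_2(\mathbb{Z}_p)$ is multiplicatively-similar to precisely one of the matrices $\begin{pmatrix}0&0\\0&0\end{pmatrix}$ or $p^s\begin{pmatrix}0&0\\1&0\end{pmatrix}$, $s\in\mathbb{N}_0$. Let $\rho\in\mathbb{Z}_p^*$ be not a square modulo $p$. Then every non-nilpotent matrix $A\in\mathfrak{gl}_2(\mathbb{Z}_p)$ is multiplicatively-similar to precisely one matrix of the form $p^sA_0$, where $s\in\mathbb{N}_0$ and $A_0$ is one of the following core matrices: (1) $\begin{pmatrix}1&0\\0&1\end{pmatrix}$; (2) $\begin{pmatrix}1&0\\0&1\end{pmatrix}+p^r\begin{pmatrix}0&d\\1&0\end{pmatrix}$, where $r\in\mathbb{N}$ and $d\in\mathbb{Z}_p$; (3) $\begin{pmatrix}0&d\\1&p^r\end{pmatrix}$, where $r\in\mathbb{N}_0$ and $d\in\mathbb{Z}_p$; (4) $\begin{pmatrix}0&p^r\\1&0\end{pmatrix}$ or $\begin{pmatrix}0&\rho p^r\\1&0\end{pmatrix}$, where $r\in\mathbb{N}_0$.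
   Context: Two matrices $A,A'\in\mathfrak{gl}_2(\mathbb{Z}_p)$ are multiplicatively-similar if $A'=uB^{-1}AB$ for some $u\in\mathbb{Z}_p^*$ and $B\in\mathrm{GL}_2(\mathbb{Z}_p)$. $\mathbb{N}=\{1,2,\ldots\}$, $\mathbb{N}_0=\mathbb{N}\cup\{0\}$. *)

theory Defs
  imports "HOL-Number_Theory.Number_Theory"
begin

text \<open>The p-adic integers Z_p, realised as the inverse limit of the rings Z/p^n Z:
  an element is a coherent sequence of canonical residues x n in [0, p^n).\<close>

type_synonym padic = "nat \<Rightarrow> int"

definition padic :: "int \<Rightarrow> padic set" where
  "padic p = {x. \<forall>n. 0 \<le> x n \<and> x n < p ^ n \<and> x (Suc n) mod p ^ n = x n}"

definition pint :: "int \<Rightarrow> int \<Rightarrow> padic" where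
  "pint p k = (\<lambda>n. k mod p ^ n)"

definition pzero :: "int \<Rightarrow> padic" where "pzero p = pint p 0"
definition pone :: "int \<Rightarrow> padic" where "pone p = pint p 1"

definition padd :: "int \<Rightarrow> padic \<Rightarrow> padic \<Rightarrow> padic" where
  "padd p x y = (\<lambda>n. (x n + y n) mod p ^ n)"

definition pmul :: "int \<Rightarrow> padic \<Rightarrow> padic \<Rightarrow> padic" where
  "pmul p x y = (\<lambda>n. (x n * y n) mod p ^ n)"

definition ppow :: "int \<Rightarrow> nat \<Rightarrow> padic" where
  "ppow p s = pint p (p ^ s)"

definition punit :: "int \<Rightarrow> padic \<Rightarrow> bool" where
  "punit p u \<longleftrightarrow> u \<in> padic p \<and> (\<exists>v \<in> padic p. pmul p u v = pone p)"

text \<open>2x2 matrices over Z_p: (a,b,c,d) stands for the matrix with rows (a b) and (c d).\<close>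

type_synonym pmat = "padic \<times> padic \<times> padic \<times> padic"

definition mcarrier :: "int \<Rightarrow> pmat \<Rightarrow> bool" where
  "mcarrier p A = (case A of (a,b,c,d) \<Rightarrow> a \<in> padic p \<and> b \<in> padic p \<and> c \<in> padic p \<and> d \<in> padic p)"

fun mmul :: "int \<Rightarrow> pmat \<Rightarrow> pmat \<Rightarrow> pmat" where
  "mmul p (a,b,c,d) (e,f,g,h) =
     (padd p (pmul p a e) (pmul p b g), padd p (pmul p a f) (pmul p b h),
      padd p (pmul p c e) (pmul p d g), padd p (pmul p c f) (pmul p d h))"

fun madd :: "int \<Rightarrow> pmat \<Rightarrow> pmat \<Rightarrow> pmat" where
  "madd p (a,b,c,d) (e,f,g,h) = (padd p a e, padd p b f, padd p c g, padd p d h)"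

fun msmul :: "int \<Rightarrow> padic \<Rightarrow> pmat \<Rightarrow> pmat" where
  "msmul p u (a,b,c,d) = (pmul p u a, pmul p u b, pmul p u c, pmul p u d)"

definition mzero :: "int \<Rightarrow> pmat" where
  "mzero p = (pzero p, pzero p, pzero p, pzero p)"

definition mone :: "int \<Rightarrow> pmat" where
  "mone p = (pone p, pzero p, pzero p, pone p)"

fun mpow :: "int \<Rightarrow> pmat \<Rightarrow> nat \<Rightarrow> pmat" where
  "mpow p A 0 = mone p"
| "mpow p A (Suc k) = mmul p (mpow p A k) A"

definition mnilpotent :: "int \<Rightarrow> pmat \<Rightarrow> bool" where
  "mnilpotent p A \<longleftrightarrow> (\<exists>k. mpow p A k = mzero p)"

definition msim :: "int \<Rightarrow> pmat \<Rightarrow> pmat \<Rightarrow> bool" where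
  "msim p A A' \<longleftrightarrow> (\<exists>u B Binv. punit p u \<and> mcarrier p B \<and> mcarrier p Binv \<and>
      mmul p B Binv = mone p \<and> mmul p Binv B = mone p \<and>
      A' = msmul p u (mmul p (mmul p Binv A) B))"

definition nil_normal :: "int \<Rightarrow> pmat set" where
  "nil_normal p = {mzero p} \<union>
     {msmul p (ppow p s) (pzero p, pzero p, pone p, pzero p) | s. True}"

definition core :: "int \<Rightarrow> padic \<Rightarrow> pmat set" where
  "core p \<rho> =
     {mone p}
   \<union> {madd p (mone p) (msmul p (ppow p r) (pzero p, d, pone p, pzero p)) | r d. r \<ge> 1 \<and> d \<in> padic p}
   \<union> {(pzero p, d, pone p, ppow p r) | r d. d \<in> padic p}
   \<union> {(pzero p, ppow p r, pone p, pzero p) | r. True}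
   \<union> {(pzero p, pmul p \<rho> (ppow p r), pone p, pzero p) | r. True}"

definition nonnil_normal :: "int \<Rightarrow> padic \<Rightarrow> pmat set" where
  "nonnil_normal p \<rho> = {msmul p (ppow p s) A0 | s A0. A0 \<in> core p \<rho>}"

end

theory Submission
  imports Defs
begin



locale pctx =
  fixes p :: int
  assumes prime_p: "prime p" and odd_p: "odd p"
begin

lemma p_gt1: "p > 1" using prime_p prime_gt_1_int by blast
lemma p_pow_pos[simp]: "p ^ n > 0" using p_gt1 by simp
lemma p_pow_nz[simp]: "p ^ n \<noteq> 0" using p_gt1 by simp

lemma padicD: "x \<in> padic p \<Longrightarrow> 0 \<le> x n \<and> x n < p ^ n"
  unfolding padic_def by blast

lemma padic_mod[simp]: "x \<in> padic p \<Longrightarrow> x n mod p ^ n = x n"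
  using padicD[of x n] by simp

lemma padic_suc_mod[simp]: "x \<in> padic p \<Longrightarrow> x (Suc n) mod p ^ n = x n"
  unfolding padic_def by blast

lemma padic_0[simp]: "x \<in> padic p \<Longrightarrow> x 0 = 0"
  using padicD[of x 0] by simp

lemma padic_coh: assumes "x \<in> padic p" "m \<le> n" shows "x n mod p ^ m = x m"
  using assms(2)
proof (induction n)
  case 0 then show ?case using assms by simp
next
  case (Suc n)
  show ?case
  proof (cases "m = Suc n")
    case True then show ?thesis using assms(1) by (simp only: True padic_mod)
  next
    case False
    then have "m \<le> n" using Suc by simp
    have "x (Suc n) mod p ^ m = (x (Suc n) mod p ^ n) mod p ^ m"
      using \<open>m \<le> n\<close> by (simp add: mod_mod_cancel le_imp_power_dvd)
    also have "\<dots> = x m" using assms Suc.IH \<open>m \<le> n\<close> by simp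
    finally show ?thesis .
  qed
qed

lemma padic_eqI: "(\<And>n. x n = y n) \<Longrightarrow> x = y" by (rule ext)

definition psub :: "padic \<Rightarrow> padic \<Rightarrow> padic" where
  "psub x y = (\<lambda>n. (x n - y n) mod p ^ n)"
definition pneg :: "padic \<Rightarrow> padic" where
  "pneg x = (\<lambda>n. (- x n) mod p ^ n)"

lemma ev[simp]:
  "padd p x y n = (x n + y n) mod p ^ n"
  "pmul p x y n = (x n * y n) mod p ^ n"
  "psub x y n = (x n - y n) mod p ^ n"
  "pneg x n = (- x n) mod p ^ n"
  "pint p k n = k mod p ^ n"
  "pzero p n = 0"
  "pone p n = 1 mod p ^ n"
  "ppow p s n = p ^ s mod p ^ n"
  by (simp_all add: padd_def pmul_def psub_def pneg_def pint_def pzero_def pone_def ppow_def)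

lemma mem_intro: assumes "\<And>n. f n = g n mod p ^ n" "\<And>n. g (Suc n) mod p ^ n = g n mod p ^ n"
  shows "f \<in> padic p"
  unfolding padic_def using assms
  by (auto simp: mod_mod_cancel le_imp_power_dvd)

lemma pint_mem[simp]: "pint p k \<in> padic p"
  by (rule mem_intro[of _ "\<lambda>n. k"]) auto
lemma pzero_mem[simp]: "pzero p \<in> padic p" unfolding pzero_def by simp
lemma pone_mem[simp]: "pone p \<in> padic p" unfolding pone_def by simp
lemma ppow_mem[simp]: "ppow p s \<in> padic p" unfolding ppow_def by simp
lemma padd_mem[simp]: "x \<in> padic p \<Longrightarrow> y \<in> padic p \<Longrightarrow> padd p x y \<in> padic p"
  apply (rule mem_intro[of _ "\<lambda>n. x n + y n"], simp)
  subgoal for n using mod_add_eq[of "x (Suc n)" "p^n" "y (Suc n)"] by simp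
  done
lemma pmul_mem[simp]: "x \<in> padic p \<Longrightarrow> y \<in> padic p \<Longrightarrow> pmul p x y \<in> padic p"
  apply (rule mem_intro[of _ "\<lambda>n. x n * y n"], simp)
  subgoal for n using mod_mult_eq[of "x (Suc n)" "p^n" "y (Suc n)"] by simp
  done
lemma psub_mem[simp]: "x \<in> padic p \<Longrightarrow> y \<in> padic p \<Longrightarrow> psub x y \<in> padic p"
  apply (rule mem_intro[of _ "\<lambda>n. x n - y n"], simp)
  subgoal for n using mod_diff_eq[of "x (Suc n)" "p^n" "y (Suc n)"] by simp
  done
lemma pneg_mem[simp]: "x \<in> padic p \<Longrightarrow> pneg x \<in> padic p"
  apply (rule mem_intro[of _ "\<lambda>n. - x n"], simp)
  subgoal for n using mod_minus_eq[of "x (Suc n)" "p^n"] by simp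
  done

lemma test1: "x \<in> padic p \<Longrightarrow> y \<in> padic p \<Longrightarrow> z \<in> padic p \<Longrightarrow>
  pmul p (padd p x y) z = padd p (pmul p z x) (pmul p y z)"
  by (rule ext) (simp add: mod_simps algebra_simps)

lemma test2: "x \<in> padic p \<Longrightarrow> pmul p (pone p) x = x"
  by (rule ext) (simp add: mod_simps)


lemma padic_mod_p: "x \<in> padic p \<Longrightarrow> 1 \<le> n \<Longrightarrow> x n mod p = x 1"
  using padic_coh[of x 1 n] by simp

lemma padic_1_range: "x \<in> padic p \<Longrightarrow> 0 \<le> x 1 \<and> x 1 < p"
  using padicD[of x 1] by simp

lemma seq_construct:
  assumes ex: "\<And>n. \<exists>y. P n y"
    and modinv: "\<And>n y. P n y \<Longrightarrow> P n (y mod p ^ n)"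
    and uniq: "\<And>n y z. P n y \<Longrightarrow> P n z \<Longrightarrow> 0 \<le> y \<Longrightarrow> y < p ^ n \<Longrightarrow> 0 \<le> z \<Longrightarrow> z < p ^ n \<Longrightarrow> y = z"
    and down: "\<And>n y. P (Suc n) y \<Longrightarrow> P n y"
  shows "\<exists>x\<in>padic p. \<forall>n. P n (x n)"
proof -
  define x where "x n = (THE y. 0 \<le> y \<and> y < p ^ n \<and> P n y)" for n
  have eu: "\<exists>!y. 0 \<le> y \<and> y < p ^ n \<and> P n y" for n
  proof -
    obtain y where "P n y" using ex by blast
    then have "0 \<le> y mod p ^ n \<and> y mod p ^ n < p ^ n \<and> P n (y mod p ^ n)"
      using modinv by simp
    then show ?thesis using uniq by blast
  qed
  have xp: "0 \<le> x n \<and> x n < p ^ n \<and> P n (x n)" for n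
    unfolding x_def using theI'[OF eu] .
  have "x (Suc n) mod p ^ n = x n" for n
  proof -
    have "P n (x (Suc n) mod p ^ n)" using xp[of "Suc n"] down modinv by blast
    moreover have "0 \<le> x (Suc n) mod p ^ n" "x (Suc n) mod p ^ n < p ^ n" by simp_all
    ultimately show ?thesis using xp[of n] uniq by blast
  qed
  then have "x \<in> padic p" unfolding padic_def using xp by blast
  then show ?thesis using xp by blast
qed

lemma punit_1: assumes "punit p u" shows "u 1 \<noteq> 0"
proof
  assume u1: "u 1 = 0"
  from assms obtain v where "pmul p u v = pone p" unfolding punit_def by blast
  then have "pmul p u v 1 = pone p 1" by simp
  then show False using u1 p_gt1 by simp
qed

lemma punit_mem: "punit p u \<Longrightarrow> u \<in> padic p" unfolding punit_def by blast

lemma not_dvd_level: assumes "x \<in> padic p" "x 1 \<noteq> 0" "1 \<le> n" shows "\<not> p dvd x n"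
  using padic_mod_p[OF assms(1,3)] assms(2) by (simp add: dvd_eq_mod_eq_0)

lemma coprime_level: assumes "x \<in> padic p" "x 1 \<noteq> 0" shows "coprime (x n) (p ^ n)"
proof (cases "n = 0")
  case True then show ?thesis by simp
next
  case False
  then have "\<not> p dvd x n" using not_dvd_level[OF assms] by simp
  then have "coprime (x n) p" using prime_p by (simp add: coprime_commute prime_imp_coprime)
  then show ?thesis by simp
qed

lemma inv_exists: assumes "x \<in> padic p" "x 1 \<noteq> 0"
  shows "\<exists>y\<in>padic p. pmul p x y = pone p"
proof -
  have "\<exists>y\<in>padic p. \<forall>n. [x n * y n = 1] (mod p ^ n)"
  proof (rule seq_construct)
    fix n show "\<exists>y. [x n * y = 1] (mod p ^ n)"
      using cong_solve_coprime_int coprime_level[OF assms] by blast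
  next
    fix n y assume "[x n * y = 1] (mod p ^ n)"
    then show "[x n * (y mod p ^ n) = 1] (mod p ^ n)" by (simp add: cong_def mod_simps)
  next
    fix n y z assume h: "[x n * y = 1] (mod p ^ n)" "[x n * z = 1] (mod p ^ n)"
      "0 \<le> y" "y < p ^ n" "0 \<le> z" "z < p ^ n"
    have "[y * (x n * z) = z * (x n * y)] (mod p ^ n)" by (simp add: algebra_simps)
    then have "[y * 1 = z * 1] (mod p ^ n)"
      using h(1,2) by (meson cong_scalar_left cong_sym cong_trans)
    then show "y = z" using h cong_less_imp_eq_int by simp
  next
    fix n y assume h: "[x (Suc n) * y = 1] (mod p ^ Suc n)"
    then have "[x (Suc n) * y = 1] (mod p ^ n)"
      by (rule cong_dvd_modulus) (simp add: le_imp_power_dvd)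
    moreover have "[x (Suc n) = x n] (mod p ^ n)" using assms(1) by (simp add: cong_def)
    ultimately show "[x n * y = 1] (mod p ^ n)"
      by (meson cong_scalar_right cong_sym cong_trans)
  qed
  then obtain y where y: "y \<in> padic p" "\<forall>n. [x n * y n = 1] (mod p ^ n)" by blast
  have "pmul p x y = pone p"
    by (rule ext) (use y in \<open>simp add: cong_def\<close>)
  then show ?thesis using y by blast
qed

lemma punit_iff: "punit p u \<longleftrightarrow> u \<in> padic p \<and> u 1 \<noteq> 0"
  using punit_1 punit_mem inv_exists unfolding punit_def by blast


lemma pmul_comm: "pmul p x y = pmul p y x" by (rule ext) (simp add: mult.commute)
lemma pmul_assoc: "pmul p (pmul p x y) z = pmul p x (pmul p y z)"
  by (rule ext) (simp add: mod_simps mult.assoc)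
lemma pmul_lcomm: "pmul p x (pmul p y z) = pmul p y (pmul p x z)"
  by (rule ext) (simp add: mod_simps algebra_simps)
lemma padd_comm: "padd p x y = padd p y x" by (rule ext) (simp add: add.commute)
lemma padd_assoc: "padd p (padd p x y) z = padd p x (padd p y z)"
  by (rule ext) (simp add: mod_simps add.assoc)
lemma pmul_one[simp]: "x \<in> padic p \<Longrightarrow> pmul p (pone p) x = x"
  by (rule ext) (simp add: mod_simps)
lemma pmul_one2[simp]: "x \<in> padic p \<Longrightarrow> pmul p x (pone p) = x"
  by (rule ext) (simp add: mod_simps)
lemma pmul_zero[simp]: "pmul p (pzero p) x = pzero p" "pmul p x (pzero p) = pzero p"
  by (rule ext, simp)+
lemma padd_zero[simp]: "x \<in> padic p \<Longrightarrow> padd p (pzero p) x = x"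
  "x \<in> padic p \<Longrightarrow> padd p x (pzero p) = x"
  by (rule ext, simp)+
lemma ppow_add: "pmul p (ppow p a) (ppow p b) = ppow p (a + b)"
  by (rule ext) (simp add: mod_simps power_add)
lemma pzero_ne_pone: "pzero p \<noteq> pone p"
proof
  assume "pzero p = pone p" then have "pzero p 1 = pone p 1" by simp
  then show False using p_gt1 by simp
qed

lemma punit_mul: assumes "punit p u" "punit p v" shows "punit p (pmul p u v)"
proof -
  have u: "u \<in> padic p" "u 1 \<noteq> 0" and v: "v \<in> padic p" "v 1 \<noteq> 0"
    using punit_iff[THEN iffD1, OF assms(1)] punit_iff[THEN iffD1, OF assms(2)] by auto
  have "\<not> p dvd u 1" using not_dvd_level[OF u] by simp
  moreover have "\<not> p dvd v 1" using not_dvd_level[OF v] by simp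
  ultimately have "\<not> p dvd (u 1 * v 1)" using prime_p prime_dvd_mult_iff by blast
  then have "pmul p u v 1 \<noteq> 0" by (simp add: dvd_eq_mod_eq_0)
  then show ?thesis using punit_iff u v by simp
qed

lemma unit_inv: assumes "punit p u" obtains v where "punit p v" "pmul p u v = pone p" "pmul p v u = pone p"
proof -
  obtain v where v: "v \<in> padic p" "pmul p u v = pone p" using assms unfolding punit_def by blast
  have vu: "pmul p v u = pone p" using v(2) by (simp add: pmul_comm)
  have "punit p v" unfolding punit_def using v(1) vu punit_mem[OF assms] by blast
  then show ?thesis using that v vu by blast
qed

lemma unit_cancel: assumes "punit p u" "x \<in> padic p" "y \<in> padic p" "pmul p u x = pmul p u y"
  shows "x = y"
proof -
  obtain v where v: "pmul p v u = pone p" using unit_inv[OF assms(1)] by blast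
  have "pmul p v (pmul p u x) = pmul p v (pmul p u y)" using assms(4) by simp
  then show ?thesis using v assms(2,3) by (simp add: pmul_assoc[symmetric])
qed

lemma ppow_cancel: assumes "x \<in> padic p" "y \<in> padic p" "pmul p (ppow p r) x = pmul p (ppow p r) y"
  shows "x = y"
proof (rule ext)
  fix n
  have e: "pmul p (ppow p r) x (n + r) = pmul p (ppow p r) y (n + r)" using assms(3) by simp
  have hz: "pmul p (ppow p r) z (n + r) = p ^ r * (z (n + r) mod p ^ n)" for z
  proof -
    have "pmul p (ppow p r) z (n + r) = (p ^ r * z (n + r)) mod p ^ (n + r)" by (simp add: mod_simps)
    also have "p ^ (n + r) = p ^ r * p ^ n" by (simp add: power_add)
    finally show ?thesis by (simp add: mod_mult_mult1)
  qed
  have "p ^ r * (x (n + r) mod p ^ n) = p ^ r * (y (n + r) mod p ^ n)"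
    using e hz[of x] hz[of y] by metis
  then have "x (n + r) mod p ^ n = y (n + r) mod p ^ n" using p_gt1 by auto
  then show "x n = y n" using padic_coh[OF assms(1), of n "n+r"] padic_coh[OF assms(2), of n "n+r"] by simp
qed

lemma ppow_unit_level: assumes "punit p w"
  shows "pmul p (ppow p k) w j = 0 \<longleftrightarrow> j \<le> k"
proof
  assume "j \<le> k"
  then have "p ^ j dvd p ^ k" by (simp add: le_imp_power_dvd)
  then have "p ^ k mod p ^ j = 0" by (simp only: dvd_eq_mod_eq_0)
  then show "pmul p (ppow p k) w j = 0" by (simp only: ev mod_mult_left_eq mult_zero_left mod_0)
next
  have wm: "w \<in> padic p" and w1: "w 1 \<noteq> 0" using punit_iff[THEN iffD1, OF assms] by auto
  assume z: "pmul p (ppow p k) w j = 0"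
  show "j \<le> k"
  proof (rule ccontr)
    assume "\<not> j \<le> k"
    then have le: "Suc k \<le> j" by simp
    have c: "pmul p (ppow p k) w j mod p ^ Suc k = pmul p (ppow p k) w (Suc k)"
      by (rule padic_coh[OF pmul_mem[OF ppow_mem wm] le])
    then have z2: "pmul p (ppow p k) w (Suc k) = 0" unfolding z by (simp only: mod_0)
    have "pmul p (ppow p k) w (Suc k) = (p ^ k * w (Suc k)) mod (p ^ k * p)"
      by (simp only: ev mod_mult_left_eq power_Suc2)
    then have "p ^ k * (w (Suc k) mod p) = 0" unfolding z2 by (simp only: mod_mult_mult1)
    then have "w (Suc k) mod p = 0" using p_gt1 by auto
    then show False using padic_mod_p[OF wm, of "Suc k"] w1 by simp
  qed
qed

lemma ppow_unit_nz: assumes "punit p w" shows "pmul p (ppow p k) w \<noteq> pzero p"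
proof
  assume eq: "pmul p (ppow p k) w = pzero p"
  have "pmul p (ppow p k) w (Suc k) = 0" by (simp only: eq ev(6))
  then show False using ppow_unit_level[OF assms, of k "Suc k"] by simp
qed

lemma val_unique: assumes "punit p w" "punit p w'" "pmul p (ppow p r) w = pmul p (ppow p r') w'"
  shows "r = r' \<and> w = w'"
proof -
  have lv: "(j \<le> r) = (j \<le> r')" for j
  proof -
    have "(j \<le> r) = (pmul p (ppow p r) w j = 0)" by (rule ppow_unit_level[OF assms(1), symmetric])
    also have "\<dots> = (pmul p (ppow p r') w' j = 0)" by (simp only: assms(3))
    also have "\<dots> = (j \<le> r')" by (rule ppow_unit_level[OF assms(2)])
    finally show ?thesis .
  qed
  have "r = r'" using lv[of r] lv[of r'] by simp
  moreover have "w = w'"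
    using ppow_cancel[OF punit_mem[OF assms(1)] punit_mem[OF assms(2)]] assms(3) \<open>r = r'\<close> by simp
  ultimately show ?thesis by simp
qed

lemma least_level: assumes "\<exists>n. \<not> Z n" "Z 0"
  shows "\<exists>r. Z r \<and> \<not> Z (Suc r)"
proof -
  obtain n where n: "\<not> Z n" using assms by blast
  then obtain m where m: "n = Suc m" using assms(2) by (cases n) auto
  define r where "r = (LEAST k. \<not> Z (Suc k))"
  have 1: "\<not> Z (Suc r)" unfolding r_def by (rule LeastI[of _ m]) (use n m in simp)
  have "Z r"
  proof (cases r)
    case 0 then show ?thesis using assms by simp
  next
    case (Suc q)
    then have "q < (LEAST k. \<not> Z (Suc k))" using r_def by simp
    then have "\<not> \<not> Z (Suc q)" by (rule not_less_Least)
    then show ?thesis using Suc by simp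
  qed
  then show ?thesis using 1 by blast
qed

lemma divp: assumes "x \<in> padic p" "x r = 0"
  shows "\<exists>y\<in>padic p. x = pmul p (ppow p r) y \<and> (x (Suc r) \<noteq> 0 \<longrightarrow> y 1 \<noteq> 0)"
proof -
  have dv: "p ^ r dvd x k" if "r \<le> k" for k
    using padic_coh[OF assms(1) that] assms(2) by (simp add: dvd_eq_mod_eq_0)
  define y where "y n = (x (n + r) div p ^ r) mod p ^ n" for n
  have ym: "y \<in> padic p"
  proof (rule mem_intro[of _ "\<lambda>n. x (n + r) div p ^ r"])
    fix n show "y n = x (n + r) div p ^ r mod p ^ n" unfolding y_def ..
    obtain a where a: "x (Suc n + r) = p ^ r * a" using dv[of "Suc n + r"] by auto
    obtain b where b: "x (n + r) = p ^ r * b" using dv[of "n + r"] by auto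
    have "x (Suc n + r) mod p ^ (n + r) = x (n + r)" using assms(1) by simp
    then have "(p ^ r * a) mod (p ^ r * p ^ n) = p ^ r * b" using a b by (simp add: power_add mult.commute)
    then have "p ^ r * (a mod p ^ n) = p ^ r * b" by (simp add: mod_mult_mult1)
    then have ab: "a mod p ^ n = b" using p_gt1 by auto
    have "x (Suc n + r) div p ^ r = a" using a p_gt1 by simp
    moreover have "x (n + r) div p ^ r = b" using b p_gt1 by simp
    ultimately show "x (Suc n + r) div p ^ r mod p ^ n = x (n + r) div p ^ r mod p ^ n"
      using ab by (metis mod_mod_trivial)
  qed
  have eq: "x = pmul p (ppow p r) y"
  proof (rule ext)
    fix n
    obtain b where b: "x (n + r) = p ^ r * b" using dv[of "n + r"] by auto
    have "pmul p (ppow p r) y n = (p ^ r * b) mod p ^ n"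
      using p_gt1 by (simp add: y_def b mod_simps)
    also have "\<dots> = x (n + r) mod p ^ n" using b by simp
    also have "\<dots> = x n" using padic_coh[OF assms(1), of n "n + r"] by simp
    finally show "x n = pmul p (ppow p r) y n" by simp
  qed
  have "y 1 \<noteq> 0" if nz: "x (Suc r) \<noteq> 0"
  proof -
    obtain b where b: "x (Suc r) = p ^ r * b" using dv[of "Suc r"] by auto
    have "0 \<le> x (Suc r)" "x (Suc r) < p ^ r * p" using padicD[OF assms(1), of "Suc r"] by (auto simp: mult.commute)
    then have "0 < b" "b < p" using b nz p_gt1
      by (auto simp: zero_less_mult_iff mult_less_cancel_left zero_le_mult_iff)
    then show ?thesis by (simp add: y_def b)
  qed
  then show ?thesis using ym eq by blast
qed

lemma val_factor: assumes "x \<in> padic p" "x \<noteq> pzero p"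
  shows "\<exists>r w. punit p w \<and> x = pmul p (ppow p r) w"
proof -
  have "\<exists>n. x n \<noteq> 0" using assms(2) by (auto simp: pzero_def pint_def fun_eq_iff)
  then obtain r where r: "x r = 0" "x (Suc r) \<noteq> 0"
    using least_level[of "\<lambda>n. x n = 0"] padic_0[OF assms(1)] by blast
  then obtain y where "y \<in> padic p" "x = pmul p (ppow p r) y" "y 1 \<noteq> 0"
    using divp[OF assms(1) r(1)] by blast
  then show ?thesis using punit_iff[of y] by blast
qed

lemma domain: assumes "x \<in> padic p" "y \<in> padic p" "pmul p x y = pzero p"
  shows "x = pzero p \<or> y = pzero p"
proof (rule ccontr)
  assume "\<not> ?thesis"
  then obtain r w t z where w: "punit p w" "x = pmul p (ppow p r) w"
    and z: "punit p z" "y = pmul p (ppow p t) z"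
    using val_factor assms by metis
  have "pmul p x y = pmul p (ppow p (r + t)) (pmul p w z)"
    unfolding w z by (simp add: ppow_add[symmetric] pmul_assoc pmul_lcomm)
  then show False using ppow_unit_nz[OF punit_mul[OF w(1) z(1)], of "r + t"] assms(3) by metis
qed


lemma p_gt2: "p > 2"
proof -
  have "p \<noteq> 2" using odd_p by auto
  then show ?thesis using p_gt1 by simp
qed

lemma not_dvd_2: "\<not> p dvd 2"
  using p_gt2 zdvd_imp_le by fastforce

lemma nonres_mult: assumes "\<not> QuadRes p a" "\<not> QuadRes p b" "\<not> p dvd a" "\<not> p dvd b"
  shows "QuadRes p (a * b)"
proof -
  define q where "q = nat p"
  have pq: "p = int q" using p_gt1 unfolding q_def by simp
  have qp: "prime q" using prime_p pq by simp
  have q2: "2 < q" using p_gt2 pq by simp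
  define k where "k = (q - 1) div 2"
  have "[a \<noteq> 0] (mod p)" using assms(3) by (simp add: cong_0_iff)
  then have La: "Legendre a p = -1" using assms(1) unfolding Legendre_def by simp
  have Lb: "Legendre b p = -1" using assms(2,4) unfolding Legendre_def by (simp add: cong_0_iff)
  have ea: "[-1 = a ^ k] (mod p)" using euler_criterion[OF qp q2, of a] La pq k_def by simp
  have eb: "[-1 = b ^ k] (mod p)" using euler_criterion[OF qp q2, of b] Lb pq k_def by simp
  have "[(-1) * (-1) = a ^ k * b ^ k] (mod p)" using cong_mult[OF ea eb] .
  then have e1: "[1 = (a * b) ^ k] (mod p)" by (simp add: power_mult_distrib)
  have eab: "[Legendre (a * b) p = (a * b) ^ k] (mod p)" using euler_criterion[OF qp q2, of "a*b"] pq k_def by simp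
  have nab: "\<not> p dvd a * b" using assms(3,4) prime_p prime_dvd_mult_iff by blast
  show ?thesis
  proof (rule ccontr)
    assume "\<not> QuadRes p (a * b)"
    then have "Legendre (a * b) p = -1" using nab unfolding Legendre_def by (simp add: cong_0_iff)
    then have "[-1 = 1] (mod p)" using eab e1 by (metis cong_sym cong_trans)
    then have "p dvd 2" by (simp add: cong_iff_dvd_diff)
    then show False using not_dvd_2 by simp
  qed
qed

lemma hensel_lift: assumes "[r0 ^ 2 = W 1] (mod p)" "\<not> p dvd r0"
  and Wc: "\<And>n. [W (Suc n) = W n] (mod p ^ n)"
  shows "1 \<le> n \<Longrightarrow> \<exists>y. [y ^ 2 = W n] (mod p ^ n) \<and> [y = r0] (mod p)"
proof (induction n rule: dec_induct)
  case base then show ?case using assms(1) by auto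
next
  case (step n)
  then obtain y where y: "[y ^ 2 = W n] (mod p ^ n)" "[y = r0] (mod p)" by blast
  have "[y ^ 2 = W (Suc n)] (mod p ^ n)" using y(1) Wc[of n] by (meson cong_sym cong_trans)
  then obtain q where q: "W (Suc n) = y ^ 2 + p ^ n * q" by (metis cong_iff_lin)
  have "\<not> p dvd y" using y(2) assms(2) by (metis cong_dvd_iff)
  then have "\<not> p dvd 2 * y" using not_dvd_2 prime_p prime_dvd_mult_iff by blast
  then have "coprime (2 * y) p" using prime_imp_coprime[OF prime_p] coprime_commute by blast
  then obtain t0 where t0: "[2 * y * t0 = 1] (mod p)" using cong_solve_coprime_int by blast
  define t where "t = t0 * q"
  have tq: "[2 * y * t = q] (mod p)" unfolding t_def using cong_scalar_right[OF t0, of q] by (simp add: ac_simps)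
  then obtain m where m: "2 * y * t = q + p * m" by (metis cong_iff_lin cong_sym)
  define y' where "y' = y + p ^ n * t"
  have "n \<ge> 1" using step by simp
  then obtain n' where n': "n = Suc n'" by (cases n) auto
  have "y' ^ 2 - W (Suc n) = p ^ n * (2 * y * t - q) + p ^ n * p ^ n * t ^ 2"
    unfolding y'_def q by (simp add: power2_eq_square algebra_simps)
  also have "\<dots> = p ^ Suc n * (m + p ^ n' * t ^ 2)"
    using m n' by (simp add: algebra_simps)
  finally have "[y' ^ 2 = W (Suc n)] (mod p ^ Suc n)"
    by (simp add: cong_iff_dvd_diff)
  moreover have "[y' = r0] (mod p)"
  proof -
    have "[y' = y] (mod p)" unfolding y'_def using n' by (simp add: cong_iff_dvd_diff)
    then show ?thesis using y(2) by (meson cong_trans)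
  qed
  ultimately show ?case by blast
qed

lemma sqrt_exists: assumes "w \<in> padic p" "w 1 \<noteq> 0" "QuadRes p (w 1)"
  shows "\<exists>y\<in>padic p. pmul p y y = w"
proof -
  obtain r0 where r0: "[r0 ^ 2 = w 1] (mod p)" using assms(3) unfolding QuadRes_def by blast
  have w1np: "\<not> p dvd w 1" using not_dvd_level[OF assms(1,2), of 1] by simp
  have nr0: "\<not> p dvd r0"
  proof
    assume "p dvd r0"
    then have "p dvd r0 ^ 2" by (metis dvd_mult2 power2_eq_square)
    then show False using r0 w1np by (metis cong_dvd_iff)
  qed
  have Wc: "[w (Suc n) = w n] (mod p ^ n)" for n using assms(1) by (simp add: cong_def)
  define P where "P n y \<longleftrightarrow> [y ^ 2 = w n] (mod p ^ n) \<and> (1 \<le> n \<longrightarrow> [y = r0] (mod p))" for n y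
  have "\<exists>y\<in>padic p. \<forall>n. P n (y n)"
  proof (rule seq_construct)
    fix n show "\<exists>y. P n y"
    proof (cases "n = 0")
      case True then show ?thesis unfolding P_def by simp
    next
      case False then show ?thesis unfolding P_def using hensel_lift[OF r0 nr0 Wc, of n] by auto
    qed
  next
    fix n y assume "P n y"
    then show "P n (y mod p ^ n)" unfolding P_def
      by (auto simp: cong_def power_mod mod_mod_cancel le_imp_power_dvd dest: le_imp_power_dvd[of 1 n p])
  next
    fix n y z assume h: "P n y" "P n z" "0 \<le> y" "y < p ^ n" "0 \<le> z" "z < p ^ n"
    show "y = z"
    proof (cases "n = 0")
      case True then show ?thesis using h by simp
    next
      case False
      then have yz: "[y = r0] (mod p)" "[z = r0] (mod p)" using h unfolding P_def by auto
      have sq: "[y ^ 2 = z ^ 2] (mod p ^ n)" using h unfolding P_def by (meson cong_sym cong_trans)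
      then have "p ^ n dvd (y - z) * (y + z)" by (simp add: cong_iff_dvd_diff power2_eq_square algebra_simps)
      moreover have "\<not> p dvd (y + z)"
      proof
        assume "p dvd y + z"
        moreover have "[y + z = 2 * r0] (mod p)" using cong_add[OF yz] by simp
        ultimately have "p dvd 2 * r0" by (metis cong_dvd_iff)
        then show False using nr0 not_dvd_2 prime_p prime_dvd_mult_iff by blast
      qed
      then have "coprime (y + z) p" using prime_imp_coprime[OF prime_p] coprime_commute by blast
      then have "coprime (y + z) (p ^ n)" by simp
      ultimately have "p ^ n dvd (y - z)" using coprime_commute coprime_dvd_mult_left_iff by blast
      then have "[y = z] (mod p ^ n)" by (simp add: cong_iff_dvd_diff)
      then show ?thesis using h cong_less_imp_eq_int by blast
    qed
  next
    fix n y assume h: "P (Suc n) y"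
    then have "[y ^ 2 = w (Suc n)] (mod p ^ n)" unfolding P_def
      by (meson cong_dvd_modulus le_imp_power_dvd le_SucI order_refl)
    then have "[y ^ 2 = w n] (mod p ^ n)" using Wc[of n] by (meson cong_trans)
    then show "P n y" using h unfolding P_def by auto
  qed
  then obtain y where y: "y \<in> padic p" "\<forall>n. [(y n) ^ 2 = w n] (mod p ^ n)" unfolding P_def by blast
  have "pmul p y y = w"
    by (rule ext) (use y assms(1) in \<open>simp add: cong_def power2_eq_square\<close>)
  then show ?thesis using y by blast
qed


section \<open>Matrices\<close>

fun mtr :: "pmat \<Rightarrow> padic" where "mtr (a,b,c,d) = padd p a d"
fun mdet :: "pmat \<Rightarrow> padic" where "mdet (a,b,c,d) = psub (pmul p a d) (pmul p b c)"
fun comp :: "pmat \<Rightarrow> pmat" where "comp X = (pzero p, pneg (mdet X), pone p, mtr X)"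
fun lvl0 :: "nat \<Rightarrow> pmat \<Rightarrow> bool" where
  "lvl0 k (a,b,c,d) \<longleftrightarrow> a k = 0 \<and> b k = 0 \<and> c k = 0 \<and> d k = 0"
fun sck :: "nat \<Rightarrow> pmat \<Rightarrow> bool" where
  "sck k (a,b,c,d) \<longleftrightarrow> b k = 0 \<and> c k = 0 \<and> a k = d k"
fun eqk :: "nat \<Rightarrow> pmat \<Rightarrow> pmat \<Rightarrow> bool" where
  "eqk k (a,b,c,d) (a',b',c',d') \<longleftrightarrow> a k = a' k \<and> b k = b' k \<and> c k = c' k \<and> d k = d' k"
fun nsc :: "pmat \<Rightarrow> bool" where
  "nsc (a,b,c,d) \<longleftrightarrow> b 1 \<noteq> 0 \<or> c 1 \<noteq> 0 \<or> a 1 \<noteq> d 1"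
fun prim :: "pmat \<Rightarrow> bool" where
  "prim (a,b,c,d) \<longleftrightarrow> a 1 \<noteq> 0 \<or> b 1 \<noteq> 0 \<or> c 1 \<noteq> 0 \<or> d 1 \<noteq> 0"
fun Bof :: "pmat \<Rightarrow> padic \<Rightarrow> padic \<Rightarrow> pmat" where
  "Bof (a,b,c,d) v1 v2 = (v1, padd p (pmul p a v1) (pmul p b v2), v2, padd p (pmul p c v1) (pmul p d v2))"
fun adj :: "pmat \<Rightarrow> pmat" where "adj (a,b,c,d) = (d, pneg b, pneg c, a)"

lemma mcar[simp]: "mcarrier p (a,b,c,d) \<longleftrightarrow> a \<in> padic p \<and> b \<in> padic p \<and> c \<in> padic p \<and> d \<in> padic p"
  by (simp add: mcarrier_def)

lemma mmul_car[simp]: "mcarrier p X \<Longrightarrow> mcarrier p Y \<Longrightarrow> mcarrier p (mmul p X Y)"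
  by (cases X rule: prod_cases4, cases Y rule: prod_cases4) simp
lemma msmul_car[simp]: "u \<in> padic p \<Longrightarrow> mcarrier p X \<Longrightarrow> mcarrier p (msmul p u X)"
  by (cases X rule: prod_cases4) simp
lemma madd_car[simp]: "mcarrier p X \<Longrightarrow> mcarrier p Y \<Longrightarrow> mcarrier p (madd p X Y)"
  by (cases X rule: prod_cases4, cases Y rule: prod_cases4) simp
lemma mone_car[simp]: "mcarrier p (mone p)" by (simp add: mone_def)
lemma mzero_car[simp]: "mcarrier p (mzero p)" by (simp add: mzero_def)
lemma adj_car[simp]: "mcarrier p X \<Longrightarrow> mcarrier p (adj X)" by (cases X rule: prod_cases4) simp
lemma comp_car[simp]: "mcarrier p X \<Longrightarrow> mcarrier p (comp X)" by (cases X rule: prod_cases4) simp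
lemma Bof_car[simp]: "mcarrier p X \<Longrightarrow> v1 \<in> padic p \<Longrightarrow> v2 \<in> padic p \<Longrightarrow> mcarrier p (Bof X v1 v2)"
  by (cases X rule: prod_cases4) simp
lemma mtr_mem[simp]: "mcarrier p X \<Longrightarrow> mtr X \<in> padic p" by (cases X rule: prod_cases4) simp
lemma mdet_mem[simp]: "mcarrier p X \<Longrightarrow> mdet X \<in> padic p" by (cases X rule: prod_cases4) simp

lemma mmul_assoc: "mmul p (mmul p X Y) Z = mmul p X (mmul p Y Z)"
  by (cases X rule: prod_cases4, cases Y rule: prod_cases4, cases Z rule: prod_cases4)
     (simp only: fun_eq_iff prod.inject ev mmul.simps mod_simps, simp add: algebra_simps)




end


context pctx begin
lemmas zs = fun_eq_iff prod.inject ev mmul.simps msmul.simps madd.simps mtr.simps mdet.simps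
  comp.simps Bof.simps adj.simps mone_def mzero_def mod_simps

lemma mmul_one_left[simp]: "mcarrier p X \<Longrightarrow> mmul p (mone p) X = X"
  by (cases X rule: prod_cases4) (simp add: mone_def)
lemma mmul_one_right[simp]: "mcarrier p X \<Longrightarrow> mmul p X (mone p) = X"
  by (cases X rule: prod_cases4) (simp add: mone_def)
lemma msmul_one[simp]: "mcarrier p X \<Longrightarrow> msmul p (pone p) X = X"
  by (cases X rule: prod_cases4) simp
lemma mmul_smul_left: "mmul p (msmul p u X) Y = msmul p u (mmul p X Y)"
  by (cases X rule: prod_cases4, cases Y rule: prod_cases4)
     (simp only: zs; intro conjI allI; rule arg_cong[where f="\<lambda>t. t mod _"]; simp add: algebra_simps)
lemma mmul_smul_right: "mmul p X (msmul p u Y) = msmul p u (mmul p X Y)"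
  by (cases X rule: prod_cases4, cases Y rule: prod_cases4)
     (simp only: zs; intro conjI allI; rule arg_cong[where f="\<lambda>t. t mod _"]; simp add: algebra_simps)
lemma msmul_msmul: "msmul p u (msmul p v X) = msmul p (pmul p u v) X"
  by (cases X rule: prod_cases4) 
     (simp only: zs; intro conjI allI; rule arg_cong[where f="\<lambda>t. t mod _"]; simp add: algebra_simps)
lemma mtr_comm: "mtr (mmul p X Y) = mtr (mmul p Y X)"
  by (cases X rule: prod_cases4, cases Y rule: prod_cases4)
     (simp only: zs; intro conjI allI; rule arg_cong[where f="\<lambda>t. t mod _"]; simp add: algebra_simps)
lemma mdet_mult: "mdet (mmul p X Y) = pmul p (mdet X) (mdet Y)"
  by (cases X rule: prod_cases4, cases Y rule: prod_cases4)
     (simp only: zs; intro conjI allI; rule arg_cong[where f="\<lambda>t. t mod _"]; simp add: algebra_simps)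
lemma mtr_smul: "mtr (msmul p u X) = pmul p u (mtr X)"
  by (cases X rule: prod_cases4)
     (simp only: zs; intro conjI allI; rule arg_cong[where f="\<lambda>t. t mod _"]; simp add: algebra_simps)
lemma mdet_smul: "mdet (msmul p u X) = pmul p (pmul p u u) (mdet X)"
  by (cases X rule: prod_cases4)
     (simp only: zs; intro conjI allI; rule arg_cong[where f="\<lambda>t. t mod _"]; simp add: algebra_simps)
lemma mdet_one[simp]: "mdet (mone p) = pone p"
  by (simp only: zs, simp)
lemma Bof_comp: "mmul p X (Bof X v1 v2) = mmul p (Bof X v1 v2) (comp X)"
  by (cases X rule: prod_cases4)
     (simp only: zs pneg_def; intro conjI allI; rule arg_cong[where f="\<lambda>t. t mod _"]; simp add: algebra_simps)
lemma adj_mul: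
  shows "mmul p X (adj X) = msmul p (mdet X) (mone p)" "mmul p (adj X) X = msmul p (mdet X) (mone p)"
  by (cases X rule: prod_cases4,
     simp only: zs; intro conjI allI; rule arg_cong[where f="\<lambda>t. t mod _"]; simp add: algebra_simps)+

lemma CH: "mmul p X X = madd p (msmul p (mtr X) X) (msmul p (pneg (mdet X)) (mone p))"
  by (cases X rule: prod_cases4,
     simp only: zs; intro conjI allI; rule arg_cong[where f="\<lambda>t. t mod _"]; simp add: algebra_simps)

lemma minv_exists: assumes "mcarrier p B" "punit p (mdet B)"
  obtains Binv where "mcarrier p Binv" "mmul p B Binv = mone p" "mmul p Binv B = mone p"
proof -
  obtain v where v: "punit p v" "pmul p (mdet B) v = pone p" "pmul p v (mdet B) = pone p"
    using unit_inv[OF assms(2)] by blast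
  have vm: "v \<in> padic p" using punit_mem[OF v(1)] .
  define Bi where "Bi = msmul p v (adj B)"
  have "mmul p B Bi = mone p" unfolding Bi_def
    using v vm assms(1) by (simp add: mmul_smul_right adj_mul msmul_msmul)
  moreover have "mmul p Bi B = mone p" unfolding Bi_def
    using v vm assms(1) by (simp add: mmul_smul_left adj_mul msmul_msmul)
  moreover have "mcarrier p Bi" unfolding Bi_def using vm assms(1) by simp
  ultimately show ?thesis using that by blast
qed

lemma cyc: assumes "mcarrier p X" "v1 \<in> padic p" "v2 \<in> padic p" "punit p (mdet (Bof X v1 v2))"
  shows "\<exists>B Binv. mcarrier p B \<and> mcarrier p Binv \<and> mmul p B Binv = mone p \<and> mmul p Binv B = mone p
     \<and> mmul p (mmul p Binv X) B = comp X"
proof -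
  define B where "B = Bof X v1 v2"
  have Bc: "mcarrier p B" unfolding B_def using assms by simp
  obtain Binv where bi: "mcarrier p Binv" "mmul p B Binv = mone p" "mmul p Binv B = mone p"
    using minv_exists[OF Bc] assms(4) unfolding B_def by blast
  have "mmul p (mmul p Binv X) B = mmul p Binv (mmul p X B)" by (simp add: mmul_assoc)
  also have "\<dots> = mmul p Binv (mmul p B (comp X))" unfolding B_def by (simp add: Bof_comp)
  also have "\<dots> = comp X" by (simp add: mmul_assoc[symmetric] bi assms)
  finally show ?thesis using Bc bi by blast
qed

end


context pctx begin

lemma inv_left: "mmul p X Y = mone p \<Longrightarrow> mcarrier p Z \<Longrightarrow> mmul p X (mmul p Y Z) = Z"
  by (simp add: mmul_assoc[symmetric])

lemma msimE: assumes "msim p A C"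
  obtains u B Binv where "punit p u" "mcarrier p B" "mcarrier p Binv" "mmul p B Binv = mone p"
    "mmul p Binv B = mone p" "C = msmul p u (mmul p (mmul p Binv A) B)"
  using assms unfolding msim_def by blast

lemma msimI: "punit p u \<Longrightarrow> mcarrier p B \<Longrightarrow> mcarrier p Binv \<Longrightarrow> mmul p B Binv = mone p \<Longrightarrow>
    mmul p Binv B = mone p \<Longrightarrow> C = msmul p u (mmul p (mmul p Binv A) B) \<Longrightarrow> msim p A C"
  unfolding msim_def by blast

lemma msim_sym: assumes "msim p A C" "mcarrier p A" shows "msim p C A"
proof -
  obtain u B Binv where h: "punit p u" "mcarrier p B" "mcarrier p Binv" "mmul p B Binv = mone p"
    "mmul p Binv B = mone p" "C = msmul p u (mmul p (mmul p Binv A) B)"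
    using msimE[OF assms(1)] by blast
  obtain v where v: "punit p v" "pmul p v u = pone p" using unit_inv[OF h(1)] by metis
  have um: "u \<in> padic p" using punit_mem[OF h(1)] .
  have "msmul p v (mmul p (mmul p B C) Binv) = A"
    unfolding h(6) using h(2-5) v assms(2) um
    by (simp add: mmul_smul_left mmul_smul_right msmul_msmul mmul_assoc inv_left)
  then show ?thesis using msimI[OF v(1) h(3) h(2) h(5) h(4)] by metis
qed

lemma msim_trans: assumes "msim p X Y" "msim p Y Z" "mcarrier p X" shows "msim p X Z"
proof -
  obtain u B Binv where h: "punit p u" "mcarrier p B" "mcarrier p Binv" "mmul p B Binv = mone p"
    "mmul p Binv B = mone p" "Y = msmul p u (mmul p (mmul p Binv X) B)"
    using msimE[OF assms(1)] by blast
  obtain w C Cinv where g: "punit p w" "mcarrier p C" "mcarrier p Cinv" "mmul p C Cinv = mone p"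
    "mmul p Cinv C = mone p" "Z = msmul p w (mmul p (mmul p Cinv Y) C)"
    using msimE[OF assms(2)] by blast
  have "mmul p (mmul p B C) (mmul p Cinv Binv) = mone p"
    using h g by (simp add: mmul_assoc inv_left)
  moreover have "mmul p (mmul p Cinv Binv) (mmul p B C) = mone p"
    using h g by (simp add: mmul_assoc inv_left)
  moreover have "Z = msmul p (pmul p w u) (mmul p (mmul p (mmul p Cinv Binv) X) (mmul p B C))"
    unfolding g(6) h(6) by (simp add: mmul_smul_left mmul_smul_right msmul_msmul mmul_assoc)
  ultimately show ?thesis using h g
    by (intro msimI[of "pmul p w u" "mmul p B C" "mmul p Cinv Binv"]) (simp_all add: punit_mul)
qed

lemma lvl0_mul1: "lvl0 k X \<Longrightarrow> lvl0 k (mmul p X Y)"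
  by (cases X rule: prod_cases4, cases Y rule: prod_cases4) (simp add: mod_simps)
lemma lvl0_mul2: "lvl0 k X \<Longrightarrow> lvl0 k (mmul p Y X)"
  by (cases X rule: prod_cases4, cases Y rule: prod_cases4) (simp add: mod_simps)
lemma lvl0_smul: "lvl0 k X \<Longrightarrow> lvl0 k (msmul p u X)"
  by (cases X rule: prod_cases4) (simp add: mod_simps)

lemma inv_lvl0: assumes "msim p X Y" "lvl0 k X" shows "lvl0 k Y"
proof -
  obtain u B Binv where h: "Y = msmul p u (mmul p (mmul p Binv X) B)"
    using msimE[OF assms(1)] by blast
  show ?thesis unfolding h by (intro lvl0_smul lvl0_mul1 lvl0_mul2 assms(2))
qed

lemma eqk_mul1: "eqk k X X' \<Longrightarrow> eqk k (mmul p X Y) (mmul p X' Y)"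
  by (cases X rule: prod_cases4, cases X' rule: prod_cases4, cases Y rule: prod_cases4) (simp only: mmul.simps eqk.simps ev)
lemma eqk_mul2: "eqk k X X' \<Longrightarrow> eqk k (mmul p Y X) (mmul p Y X')"
  by (cases X rule: prod_cases4, cases X' rule: prod_cases4, cases Y rule: prod_cases4) (simp only: mmul.simps eqk.simps ev)
lemma eqk_smul: "eqk k X X' \<Longrightarrow> eqk k (msmul p u X) (msmul p u X')"
  by (cases X rule: prod_cases4, cases X' rule: prod_cases4) (simp only: msmul.simps eqk.simps ev)

lemma eqk_pres: assumes "eqk k X X'"
  shows "eqk k (msmul p u (mmul p (mmul p Binv X) B)) (msmul p u (mmul p (mmul p Binv X') B))"
  by (intro eqk_smul eqk_mul1 eqk_mul2 assms)

lemma sck_eqk: "mcarrier p X \<Longrightarrow> sck k X \<Longrightarrow> eqk k X (msmul p (fst X) (mone p))"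
  by (cases X rule: prod_cases4) (simp add: mone_def mod_simps)

lemma sck_scalar: "sck k (msmul p s (mone p))"
  by (simp add: mone_def mod_simps)

lemma sck_eqk2: "eqk k X Y \<Longrightarrow> sck k Y \<Longrightarrow> sck k X"
  by (cases X rule: prod_cases4, cases Y rule: prod_cases4) simp

lemma inv_sc: assumes "msim p X Y" "mcarrier p X" "sck k X" shows "sck k Y"
proof -
  obtain u B Binv where h: "punit p u" "mcarrier p B" "mcarrier p Binv" "mmul p B Binv = mone p"
    "mmul p Binv B = mone p" "Y = msmul p u (mmul p (mmul p Binv X) B)"
    using msimE[OF assms(1)] by blast
  define a where "a = fst X"
  have am: "a \<in> padic p" unfolding a_def using assms(2) by (cases X rule: prod_cases4) simp
  have e: "eqk k Y (msmul p u (mmul p (mmul p Binv (msmul p a (mone p))) B))"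
    unfolding h(6) a_def by (rule eqk_pres[OF sck_eqk[OF assms(2,3)]])
  have "msmul p u (mmul p (mmul p Binv (msmul p a (mone p))) B) = msmul p (pmul p u a) (mone p)"
    using h am by (simp add: mmul_smul_left mmul_smul_right msmul_msmul mmul_assoc)
  then show ?thesis using sck_eqk2[OF e] sck_scalar by simp
qed

lemma inv_trdet: assumes "msim p X Y" "mcarrier p X"
  shows "\<exists>u. punit p u \<and> mtr Y = pmul p u (mtr X) \<and> mdet Y = pmul p (pmul p u u) (mdet X)"
proof -
  obtain u B Binv where h: "punit p u" "mcarrier p B" "mcarrier p Binv" "mmul p B Binv = mone p"
    "mmul p Binv B = mone p" "Y = msmul p u (mmul p (mmul p Binv X) B)"
    using msimE[OF assms(1)] by blast
  have "mtr (mmul p (mmul p Binv X) B) = mtr (mmul p B (mmul p Binv X))" by (rule mtr_comm)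
  also have "\<dots> = mtr X" using h assms(2) by (simp add: inv_left)
  finally have t: "mtr Y = pmul p u (mtr X)" unfolding h(6) by (simp add: mtr_smul)
  have "mdet (mmul p (mmul p Binv X) B) = pmul p (mdet X) (mdet (mmul p Binv B))"
    by (simp add: mdet_mult pmul_comm pmul_lcomm)
  also have "\<dots> = mdet X" using h assms(2) by simp
  finally have d: "mdet Y = pmul p (pmul p u u) (mdet X)" unfolding h(6) by (simp add: mdet_smul)
  show ?thesis using t d h(1) by blast
qed

end


context pctx begin

lemma msim_car: assumes "msim p X Y" "mcarrier p X" shows "mcarrier p Y"
proof -
  obtain u B Binv where h: "punit p u" "mcarrier p B" "mcarrier p Binv"
    "Y = msmul p u (mmul p (mmul p Binv X) B)"
    using msimE[OF assms(1)] by blast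
  show ?thesis unfolding h(4) using h(1-3) assms(2) punit_mem by simp
qed

lemma sck_iff: assumes "msim p X Y" "mcarrier p X" shows "sck k X = sck k Y"
  using inv_sc[OF assms] inv_sc[OF msim_sym[OF assms] msim_car[OF assms]] by blast

lemma lvl0_iff: assumes "msim p X Y" "mcarrier p X" shows "lvl0 k X = lvl0 k Y"
  using inv_lvl0[OF assms(1)] inv_lvl0[OF msim_sym[OF assms]] by blast

definition T2 :: "nat \<Rightarrow> padic \<Rightarrow> pmat" where "T2 r d = (pone p, pmul p (ppow p r) d, ppow p r, pone p)"
definition T3 :: "nat \<Rightarrow> padic \<Rightarrow> pmat" where "T3 r d = (pzero p, d, pone p, ppow p r)"
definition T4 :: "nat \<Rightarrow> padic \<Rightarrow> pmat" where "T4 r a = (pzero p, pmul p a (ppow p r), pone p, pzero p)"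

lemma p_nz[simp]: "p \<noteq> 0" using p_gt1 by simp
lemma p_pos'[simp]: "0 < p" using p_gt1 by simp
lemma one_mod_p[simp]: "1 mod p = 1" using p_gt1 by simp
lemma pone_1[simp]: "pone p 1 = 1" using p_gt1 by simp
lemma pone_ne_pzero: "pone p \<noteq> pzero p" using pzero_ne_pone by metis

lemma sck_mone: "sck k (mone p)" by (simp add: mone_def)
lemma sck_T2: "k \<le> r \<Longrightarrow> sck k (T2 r d)"
proof -
  assume "k \<le> r"
  then have "p ^ k dvd p ^ r" by (simp add: le_imp_power_dvd)
  then have "p ^ r mod p ^ k = 0" by (simp only: dvd_eq_mod_eq_0)
  then show ?thesis unfolding T2_def by (simp add: mod_simps)
qed
lemma nsck_T2: "\<not> sck (Suc r) (T2 r d)"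
proof -
  have "p ^ r mod p ^ Suc r = p ^ r" using p_gt1 by (simp add: mod_pos_pos_trivial)
  then show ?thesis unfolding T2_def by simp
qed
lemma nsck_T3: "\<not> sck 1 (T3 r d)" unfolding T3_def by simp
lemma nsck_T4: "\<not> sck 1 (T4 r a)" unfolding T4_def by simp

lemma car_T2: "d \<in> padic p \<Longrightarrow> mcarrier p (T2 r d)" unfolding T2_def by simp
lemma car_T3: "d \<in> padic p \<Longrightarrow> mcarrier p (T3 r d)" unfolding T3_def by simp
lemma car_T4: "a \<in> padic p \<Longrightarrow> mcarrier p (T4 r a)" unfolding T4_def by simp

lemma psub_cancel: assumes "y \<in> padic p" "z \<in> padic p" "psub x y = psub x z" shows "y = z"
proof (rule ext)
  fix n
  have "(x n - y n) mod p ^ n = (x n - z n) mod p ^ n" using fun_cong[OF assms(3), of n] by simp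
  then have "[x n - y n = x n - z n] (mod p ^ n)" by (simp add: cong_def)
  then have "[y n = z n] (mod p ^ n)" by (simp add: cong_iff_dvd_diff dvd_diff_commute)
  then show "y n = z n" using padicD[OF assms(1)] padicD[OF assms(2)] cong_less_imp_eq_int by blast
qed

lemma two_unit: "punit p (padd p (pone p) (pone p))"
proof -
  have "padd p (pone p) (pone p) 1 = 2" using p_gt2 by simp
  then show ?thesis unfolding punit_iff by simp
qed

lemma ppow_nz: "ppow p r \<noteq> pzero p"
  using ppow_unit_nz[of "pone p" r] punit_iff by simp

lemma pone_unit: "punit p (pone p)" unfolding punit_iff by simp


lemma core_cases: assumes "X \<in> core p \<rho>"
  shows "X = mone p \<or> (\<exists>r d. 1 \<le> r \<and> d \<in> padic p \<and> X = T2 r d) \<or> (\<exists>r d. d \<in> padic p \<and> X = T3 r d)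
    \<or> (\<exists>r a. a \<in> {pone p, \<rho>} \<and> X = T4 r a)"
proof -
  have e2: "madd p (mone p) (msmul p (ppow p r) (pzero p, d, pone p, pzero p)) = T2 r d" if "d \<in> padic p" for r d
    using that by (simp add: mone_def T2_def)
  have e4: "(pzero p, ppow p r, pone p, pzero p) = T4 r (pone p)" for r
    by (simp add: T4_def)
  show ?thesis using assms unfolding core_def T3_def[symmetric]
    apply (elim UnE)
    subgoal by blast
    subgoal using e2 by blast
    subgoal by blast
    subgoal using e4 by blast
    subgoal by (auto simp: T4_def)
    done
qed

lemma nonQR_sq: assumes "\<rho> \<in> padic p" "\<not> QuadRes p (\<rho> 1)" shows "\<rho> \<noteq> pmul p v v"
proof
  assume e: "\<rho> = pmul p v v"
  have "\<rho> 1 = (v 1 * v 1) mod p" using fun_cong[OF e, of 1] by simp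
  then have "[v 1 ^ 2 = \<rho> 1] (mod p)" by (simp add: cong_def power2_eq_square)
  then show False using assms(2) unfolding QuadRes_def by blast
qed

lemma pmul_psub0: "pmul p k (psub (pzero p) e) = psub (pzero p) (pmul p k e)"
  by (rule ext) (simp add: mod_simps)

lemma core_uniq: assumes rho: "punit p \<rho>" "\<not> QuadRes p (\<rho> 1)"
  and X: "X \<in> core p \<rho>" and Y: "Y \<in> core p \<rho>" and sim: "msim p X Y"
  shows "X = Y"
proof -
  have rm: "\<rho> \<in> padic p" using punit_mem[OF rho(1)] .
  have cX: "mcarrier p X" using core_cases[OF X] rm by (auto simp: mone_def car_T2 car_T3 car_T4)
  note sk = sck_iff[OF sim cX]
  obtain u where u: "punit p u" "mtr Y = pmul p u (mtr X)" "mdet Y = pmul p (pmul p u u) (mdet X)"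
    using inv_trdet[OF sim cX] by blast
  have um: "u \<in> padic p" using punit_mem[OF u(1)] .
  define two where "two = padd p (pone p) (pone p)"
  have two: "punit p two" "two \<in> padic p" unfolding two_def using two_unit by simp_all
  have tr1: "mtr (mone p) = two" unfolding two_def by (simp add: mone_def)
  have tr2: "mtr (T2 r d) = two" for r d unfolding two_def by (simp add: T2_def)
  have tr3: "mtr (T3 r d) = ppow p r" for r d by (simp add: T3_def)
  have tr4: "mtr (T4 r a) = pzero p" for r a by (simp add: T4_def)
  have dt2: "mdet (T2 r d) = psub (pmul p (pone p) (pone p)) (pmul p (ppow p (r + r)) d)" for r d
    by (simp add: T2_def ppow_add[symmetric] pmul_comm pmul_lcomm)
  have dt3: "d \<in> padic p \<Longrightarrow> mdet (T3 r d) = psub (pzero p) d" for r d by (simp add: T3_def)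
  have dt4: "a \<in> padic p \<Longrightarrow> mdet (T4 r a) = psub (pzero p) (pmul p (ppow p r) a)" for r a
    by (simp add: T4_def pmul_comm)
  have T2T2: "r = r' \<and> d = d'" if "1 \<le> r" "1 \<le> r'" "d \<in> padic p" "d' \<in> padic p" "X = T2 r d" "Y = T2 r' d'" for r r' d d'
  proof -
    have rr: "r = r'"
    proof (rule ccontr)
      assume "r \<noteq> r'"
      then consider "r < r'" | "r' < r" by linarith
      then show False
      proof cases
        case 1 then show ?thesis using sk[of "Suc r"] that sck_T2[of "Suc r" r' d'] nsck_T2[of r d] by simp
      next
        case 2 then show ?thesis using sk[of "Suc r'"] that sck_T2[of "Suc r'" r d] nsck_T2[of r' d'] by simp
      qed
    qed
    have "pmul p two (pone p) = pmul p two u" using u(2) that tr2 two by (simp add: pmul_comm)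
    then have u1: "u = pone p" using unit_cancel[OF two(1)] um by simp
    have "mdet Y = mdet X" using u(3) u1 that by (simp add: car_T2)
    then have "pmul p (ppow p (r + r)) d' = pmul p (ppow p (r + r)) d"
      using that rr dt2 by (simp add: psub_cancel)
    then show ?thesis using ppow_cancel that rr by blast
  qed
  have T4T4: "r = r' \<and> a' = pmul p (pmul p u u) a" if "punit p a" "punit p a'" "X = T4 r a" "Y = T4 r' a'" for r r' a a'
  proof -
    have am: "a \<in> padic p" "a' \<in> padic p" using that punit_mem by auto
    have "psub (pzero p) (pmul p (ppow p r') a') = psub (pzero p) (pmul p (pmul p u u) (pmul p (ppow p r) a))"
      using u(3) that dt4 am by (simp add: pmul_psub0)
    then have "pmul p (ppow p r') a' = pmul p (ppow p r) (pmul p (pmul p u u) a)"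
      using am um by (simp add: psub_cancel pmul_lcomm)
    then show ?thesis using val_unique[OF that(2) punit_mul[OF punit_mul[OF u(1) u(1)] that(1)], of r' r] by simp
  qed
  have pu: "punit p (pone p)" by (rule pone_unit)
  show ?thesis
  using core_cases[OF X]
  proof (elim disjE exE conjE)
    assume x: "X = mone p"
    show ?thesis using core_cases[OF Y]
    proof (elim disjE exE conjE)
      show "Y = mone p \<Longrightarrow> X = Y" using x by simp
      fix r d assume "1 \<le> r" "Y = T2 r d"
      then show "X = Y" using sk[of "Suc r"] x sck_mone nsck_T2 by simp
    next
      fix r d assume "Y = T3 r d" then show "X = Y" using sk[of 1] x sck_mone nsck_T3 by simp
    next
      fix r a assume "Y = T4 r a" then show "X = Y" using sk[of 1] x sck_mone nsck_T4 by simp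
    qed
  next
    fix r d assume x: "1 \<le> r" "d \<in> padic p" "X = T2 r d"
    show ?thesis using core_cases[OF Y]
    proof (elim disjE exE conjE)
      show "Y = mone p \<Longrightarrow> X = Y" using sk[of "Suc r"] x sck_mone nsck_T2 by simp
      fix r' d' assume "1 \<le> r'" "d' \<in> padic p" "Y = T2 r' d'"
      then show "X = Y" using T2T2[of r r' d d'] x by simp
    next
      fix r' d' assume "Y = T3 r' d'" then show "X = Y" using sk[of 1] x sck_T2[of 1 r d] nsck_T3 by simp
    next
      fix r' a assume "Y = T4 r' a" then show "X = Y" using sk[of 1] x sck_T2[of 1 r d] nsck_T4 by simp
    qed
  next
    fix r d assume x: "d \<in> padic p" "X = T3 r d"
    show ?thesis using core_cases[OF Y]
    proof (elim disjE exE conjE)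
      show "Y = mone p \<Longrightarrow> X = Y" using sk[of 1] x sck_mone nsck_T3 by simp
      fix r' d' assume "1 \<le> r'" "d' \<in> padic p" "Y = T2 r' d'"
      then show "X = Y" using sk[of 1] x sck_T2[of 1 r' d'] nsck_T3 by simp
    next
      fix r' d' assume y: "d' \<in> padic p" "Y = T3 r' d'"
      have "pmul p (ppow p r') (pone p) = pmul p (ppow p r) u" using u(2) x y tr3 um by (simp add: pmul_comm)
      then have ru: "r' = r" "pone p = u" using val_unique[OF pu u(1)] by auto
      have "psub (pzero p) d' = psub (pzero p) d" using u(3) x y dt3 ru[symmetric] by simp
      then have "d' = d" using psub_cancel x y by blast
      then show "X = Y" using x y ru by simp
    next
      fix r' a assume y: "Y = T4 r' a"
      have "pmul p (ppow p r) u = pzero p" using u(2) x y tr3 tr4 by (simp add: pmul_comm)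
      then show "X = Y" using ppow_unit_nz[OF u(1)] by simp
    qed
  next
    fix r a assume a: "a \<in> {pone p, \<rho>}" and x: "X = T4 r a"
    have au: "punit p a" using a rho pu by auto
    show ?thesis using core_cases[OF Y]
    proof (elim disjE exE conjE)
      show "Y = mone p \<Longrightarrow> X = Y" using sk[of 1] x sck_mone nsck_T4 by simp
      fix r' d' assume "1 \<le> r'" "d' \<in> padic p" "Y = T2 r' d'"
      then show "X = Y" using sk[of 1] x sck_T2[of 1 r' d'] nsck_T4 by simp
    next
      fix r' d' assume y: "d' \<in> padic p" "Y = T3 r' d'"
      have "ppow p r' = pzero p" using u(2) x y tr3 tr4 by simp
      then show "X = Y" using ppow_nz by simp
    next
      fix r' a' assume a': "a' \<in> {pone p, \<rho>}" and y: "Y = T4 r' a'"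
      have au': "punit p a'" using a' rho pu by auto
      have ra: "r = r'" "a' = pmul p (pmul p u u) a" using T4T4[OF au au' x y] by auto
      show "X = Y"
      proof (cases "a = a'")
        case True then show ?thesis using x y ra by simp
      next
        case False
        then consider "a = pone p" "a' = \<rho>" | "a = \<rho>" "a' = pone p" using a a' by blast
        then show ?thesis
        proof cases
          case 1
          then have "\<rho> = pmul p u u" using ra um by simp
          then show ?thesis using nonQR_sq[OF rm rho(2)] by blast
        next
          case 2
          obtain v where v: "punit p v" "pmul p v u = pone p" using unit_inv[OF u(1)] by metis
          have vm: "v \<in> padic p" using punit_mem[OF v(1)] .
          have "pmul p (pmul p v v) (pmul p (pmul p u u) \<rho>) = pmul p (pmul p (pmul p v u) (pmul p v u)) \<rho>"
            by (simp add: pmul_assoc pmul_comm pmul_lcomm)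
          also have "\<dots> = \<rho>" using v rm by simp
          finally have f: "pmul p (pmul p v v) (pmul p (pmul p u u) \<rho>) = \<rho>" .
          have "pmul p (pmul p u u) \<rho> = pone p" using ra 2 by simp
          then have "pmul p v v = \<rho>" using f vm by simp
          then show ?thesis using nonQR_sq[OF rm rho(2)] by metis
        qed
      qed
    qed
  qed
qed

end


context pctx begin

lemma lvl0_smul_pow: "k \<le> s \<Longrightarrow> lvl0 k (msmul p (ppow p s) X)"
proof -
  assume "k \<le> s"
  then have "p ^ k dvd p ^ s" by (simp add: le_imp_power_dvd)
  then have "p ^ s mod p ^ k = 0" by (simp only: dvd_eq_mod_eq_0)
  then show ?thesis by (cases X rule: prod_cases4) (simp add: mod_simps)
qed

lemma lvl0_down: assumes "mcarrier p X" "lvl0 k X" "m \<le> k" shows "lvl0 m X"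
proof -
  have "x k = 0 \<Longrightarrow> x \<in> padic p \<Longrightarrow> x m = 0" for x using padic_coh[of x m k] assms(3) by simp
  then show ?thesis using assms by (cases X rule: prod_cases4) simp
qed

lemma unit_lvl: assumes "e \<in> padic p" "e 1 \<noteq> 0" shows "pmul p (ppow p s) e (Suc s) \<noteq> 0"
  using ppow_unit_level[of e s "Suc s"] assms punit_iff by simp

lemma prim_nlvl0: assumes "mcarrier p X" "prim X" shows "\<not> lvl0 (Suc s) (msmul p (ppow p s) X)"
  using assms unit_lvl by (cases X rule: prod_cases4) (auto simp del: ev)

lemma content_eq: assumes "mcarrier p X" "mcarrier p Y" "prim X" "prim Y"
  "msim p (msmul p (ppow p s) X) (msmul p (ppow p t) Y)" shows "s = t"
proof -
  have cX: "mcarrier p (msmul p (ppow p s) X)" using assms by simp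
  note li = lvl0_iff[OF assms(5) cX]
  show ?thesis
  proof (rule ccontr)
    assume "s \<noteq> t"
    then consider "s < t" | "t < s" by linarith
    then show False
    proof cases
      case 1
      have "lvl0 t (msmul p (ppow p t) Y)" using lvl0_smul_pow by simp
      then have "lvl0 t (msmul p (ppow p s) X)" using li by blast
      then have "lvl0 (Suc s) (msmul p (ppow p s) X)" using lvl0_down cX 1 by simp
      then show False using prim_nlvl0 assms by blast
    next
      case 2
      have "lvl0 s (msmul p (ppow p s) X)" using lvl0_smul_pow by simp
      then have "lvl0 s (msmul p (ppow p t) Y)" using li by blast
      then have "lvl0 (Suc t) (msmul p (ppow p t) Y)" using lvl0_down assms 2 by simp
      then show False using prim_nlvl0 assms by blast
    qed
  qed
qed

lemma msmul_ppow_cancel: assumes "mcarrier p X" "mcarrier p Y" "msmul p (ppow p s) X = msmul p (ppow p s) Y"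
  shows "X = Y"
proof -
  obtain a b c d where x: "X = (a,b,c,d)" by (cases X rule: prod_cases4)
  obtain a' b' c' d' where y: "Y = (a',b',c',d')" by (cases Y rule: prod_cases4)
  have "pmul p (ppow p s) a = pmul p (ppow p s) a'" "pmul p (ppow p s) b = pmul p (ppow p s) b'"
    "pmul p (ppow p s) c = pmul p (ppow p s) c'" "pmul p (ppow p s) d = pmul p (ppow p s) d'"
    using assms(3) unfolding x y by simp_all
  then have "a = a'" "b = b'" "c = c'" "d = d'" using assms(1,2) unfolding x y
    by (auto intro: ppow_cancel)
  then show ?thesis using x y by simp
qed

lemma msim_pow_cancel: assumes "mcarrier p X" "mcarrier p Y"
  "msim p (msmul p (ppow p s) X) (msmul p (ppow p s) Y)" shows "msim p X Y"
proof -
  obtain u B Binv where h: "punit p u" "mcarrier p B" "mcarrier p Binv" "mmul p B Binv = mone p"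
    "mmul p Binv B = mone p" "msmul p (ppow p s) Y = msmul p u (mmul p (mmul p Binv (msmul p (ppow p s) X)) B)"
    using msimE[OF assms(3)] by blast
  have "msmul p u (mmul p (mmul p Binv (msmul p (ppow p s) X)) B)
      = msmul p (ppow p s) (msmul p u (mmul p (mmul p Binv X) B))"
    by (simp add: mmul_smul_left mmul_smul_right msmul_msmul pmul_comm)
  moreover have ca: "mcarrier p (msmul p u (mmul p (mmul p Binv X) B))"
    using h assms punit_mem by simp
  ultimately have "Y = msmul p u (mmul p (mmul p Binv X) B)"
    using msmul_ppow_cancel[OF assms(2) ca] h(6) by simp
  then show ?thesis using msimI h by blast
qed

lemma prim_mone: "prim (mone p)" by (simp add: mone_def)
lemma prim_core: "X \<in> core p \<rho> \<Longrightarrow> prim X"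
  using core_cases[of X \<rho>] by (auto simp: mone_def T2_def T3_def T4_def)
lemma car_core: "punit p \<rho> \<Longrightarrow> X \<in> core p \<rho> \<Longrightarrow> mcarrier p X"
  using core_cases[of X \<rho>] punit_mem by (auto simp: mone_def car_T2 car_T3 car_T4)

lemma nonnil_uniq: assumes rho: "punit p \<rho>" "\<not> QuadRes p (\<rho> 1)"
  and A: "mcarrier p A" and C1: "C1 \<in> nonnil_normal p \<rho>" "msim p A C1"
  and C2: "C2 \<in> nonnil_normal p \<rho>" "msim p A C2"
  shows "C1 = C2"
proof -
  obtain s X where X: "C1 = msmul p (ppow p s) X" "X \<in> core p \<rho>" using C1(1) unfolding nonnil_normal_def by blast
  obtain t Y where Y: "C2 = msmul p (ppow p t) Y" "Y \<in> core p \<rho>" using C2(1) unfolding nonnil_normal_def by blast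
  have cX: "mcarrier p X" "mcarrier p Y" using car_core rho X Y by auto
  have c1: "mcarrier p C1" using X cX by simp
  have "msim p C1 C2" using msim_trans[OF msim_sym[OF C1(2) A] C2(2) c1] .
  then have s: "msim p (msmul p (ppow p s) X) (msmul p (ppow p t) Y)" using X Y by simp
  have "s = t" using content_eq[OF cX prim_core prim_core s] X Y by blast
  then have "msim p X Y" using msim_pow_cancel[OF cX] s by simp
  then have "X = Y" using core_uniq[OF rho X(2) Y(2)] by blast
  then show ?thesis using X Y \<open>s = t\<close> by simp
qed

lemma nil_uniq: assumes A: "mcarrier p A" and C1: "C1 \<in> nil_normal p" "msim p A C1"
  and C2: "C2 \<in> nil_normal p" "msim p A C2"
  shows "C1 = C2"
proof -
  define N where "N = (pzero p, pzero p, pone p, pzero p)"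
  have cN: "mcarrier p N" "prim N" unfolding N_def by simp_all
  have car: "mcarrier p C" if "C \<in> nil_normal p" for C using that unfolding nil_normal_def by auto
  have sim: "msim p C1 C2" using msim_trans[OF msim_sym[OF C1(2) A] C2(2) car[OF C1(1)]] .
  have z: "lvl0 k (mzero p)" for k by (simp add: mzero_def)
  consider "C1 = mzero p" "C2 = mzero p" | s where "C1 = mzero p" "C2 = msmul p (ppow p s) N"
    | s where "C1 = msmul p (ppow p s) N" "C2 = mzero p"
    | s t where "C1 = msmul p (ppow p s) N" "C2 = msmul p (ppow p t) N"
    using C1(1) C2(1) unfolding nil_normal_def N_def by blast
  then show ?thesis
  proof cases
    case 1 then show ?thesis by simp
  next
    case (2 s)
    then have "lvl0 (Suc s) C2" using lvl0_iff[OF sim car[OF C1(1)]] z by blast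
    then show ?thesis using prim_nlvl0[OF cN] 2 by simp
  next
    case (3 s)
    then have "lvl0 (Suc s) C1" using lvl0_iff[OF sim car[OF C1(1)]] z by blast
    then show ?thesis using prim_nlvl0[OF cN] 3 by simp
  next
    case (4 s t)
    then have "s = t" using content_eq[OF cN(1) cN(1) cN(2) cN(2)] sim by simp
    then show ?thesis using 4 by simp
  qed
qed

end


context pctx begin

lemma padic_mod1[simp]: "x \<in> padic p \<Longrightarrow> x 1 mod p = x 1"
  using padic_mod[of x 1] by simp
lemma padic_mod1'[simp]: "x \<in> padic p \<Longrightarrow> x (Suc 0) mod p = x (Suc 0)"
  using padic_mod[of x 1] by simp

lemma mat_content: assumes "mcarrier p A" "A \<noteq> mzero p"
  shows "\<exists>s A0. mcarrier p A0 \<and> prim A0 \<and> A = msmul p (ppow p s) A0 \<and> (lvl0 1 A \<longrightarrow> 1 \<le> s)"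
proof -
  obtain a b c d where A: "A = (a,b,c,d)" by (cases A rule: prod_cases4)
  have m: "a \<in> padic p" "b \<in> padic p" "c \<in> padic p" "d \<in> padic p" using assms(1) A by auto
  have "\<exists>n. \<not> lvl0 n A"
  proof (rule ccontr)
    assume "\<not> (\<exists>n. \<not> lvl0 n A)"
    then have "\<forall>n. a n = 0 \<and> b n = 0 \<and> c n = 0 \<and> d n = 0" using A by simp
    then have "A = mzero p" using A by (simp add: mzero_def fun_eq_iff)
    then show False using assms(2) by simp
  qed
  moreover have "lvl0 0 A" using A m by simp
  ultimately obtain s where s: "lvl0 s A" "\<not> lvl0 (Suc s) A" using least_level[of "\<lambda>n. lvl0 n A"] by blast
  have z: "a s = 0" "b s = 0" "c s = 0" "d s = 0" using s(1) A by auto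
  obtain a0 where a0: "a0 \<in> padic p" "a = pmul p (ppow p s) a0" "a (Suc s) \<noteq> 0 \<longrightarrow> a0 1 \<noteq> 0"
    using divp[OF m(1) z(1)] by blast
  obtain b0 where b0: "b0 \<in> padic p" "b = pmul p (ppow p s) b0" "b (Suc s) \<noteq> 0 \<longrightarrow> b0 1 \<noteq> 0"
    using divp[OF m(2) z(2)] by blast
  obtain c0 where c0: "c0 \<in> padic p" "c = pmul p (ppow p s) c0" "c (Suc s) \<noteq> 0 \<longrightarrow> c0 1 \<noteq> 0"
    using divp[OF m(3) z(3)] by blast
  obtain d0 where d0: "d0 \<in> padic p" "d = pmul p (ppow p s) d0" "d (Suc s) \<noteq> 0 \<longrightarrow> d0 1 \<noteq> 0"
    using divp[OF m(4) z(4)] by blast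
  have "prim (a0, b0, c0, d0)" using s(2) A a0(3) b0(3) c0(3) d0(3) by auto
  moreover have "lvl0 1 A \<longrightarrow> 1 \<le> s" using s(2) by (cases s) auto
  moreover have "A = msmul p (ppow p s) (a0, b0, c0, d0)" using A a0 b0 c0 d0 by simp
  ultimately show ?thesis using a0 b0 c0 d0 by (intro exI[of _ s] exI[of _ "(a0,b0,c0,d0)"]) simp
qed

lemma mod_p_diff: "0 \<le> x \<Longrightarrow> x < p \<Longrightarrow> 0 \<le> y \<Longrightarrow> y < p \<Longrightarrow> (x - y) mod p = 0 \<Longrightarrow> x = y"
  using cong_less_imp_eq_int[of x p y] by (simp add: cong_iff_dvd_diff dvd_eq_mod_eq_0)

lemma choose_v: assumes "mcarrier p X" "nsc X"
  shows "\<exists>v1 v2. v1 \<in> padic p \<and> v2 \<in> padic p \<and> punit p (mdet (Bof X v1 v2))"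
proof -
  obtain a b c d where X: "X = (a,b,c,d)" by (cases X rule: prod_cases4)
  have m: "a \<in> padic p" "b \<in> padic p" "c \<in> padic p" "d \<in> padic p" using assms(1) X by auto
  have r: "0 \<le> a 1 \<and> a 1 < p" "0 \<le> b 1 \<and> b 1 < p" "0 \<le> c 1 \<and> c 1 < p" "0 \<le> d 1 \<and> d 1 < p"
    using padic_1_range m by auto
  consider "c 1 \<noteq> 0" | "c 1 = 0" "b 1 \<noteq> 0" | "c 1 = 0" "b 1 = 0" "a 1 \<noteq> d 1" using assms(2) X by auto
  then show ?thesis
  proof cases
    case 1
    have "mdet (Bof X (pone p) (pzero p)) 1 = c 1" using m unfolding X by (simp add: mod_simps)
    then show ?thesis using 1 m X by (intro exI[of _ "pone p"] exI[of _ "pzero p"]) (simp add: punit_iff)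
  next
    case 2
    have "mdet (Bof X (pzero p) (pone p)) 1 = (- b 1) mod p" using m unfolding X by (simp add: mod_simps)
    moreover have "(- b 1) mod p \<noteq> 0" using mod_p_diff[of 0 "b 1"] r 2 by auto
    ultimately show ?thesis using m X by (intro exI[of _ "pzero p"] exI[of _ "pone p"]) (simp add: punit_iff)
  next
    case 3
    have "mdet (Bof X (pone p) (pone p)) 1 = (d 1 - a 1) mod p" using m 3 unfolding X by (simp add: mod_simps)
    moreover have "(d 1 - a 1) mod p \<noteq> 0" using mod_p_diff[of "d 1" "a 1"] r 3 by auto
    ultimately show ?thesis using m X by (intro exI[of _ "pone p"] exI[of _ "pone p"]) (simp add: punit_iff)
  qed
qed

lemma nsc_smul: assumes "punit p u" "mcarrier p X" "nsc X" shows "nsc (msmul p u X)"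
proof -
  obtain a b c d where X: "X = (a,b,c,d)" by (cases X rule: prod_cases4)
  have m: "a \<in> padic p" "b \<in> padic p" "c \<in> padic p" "d \<in> padic p" using assms(2) X by auto
  have u: "u \<in> padic p" "u 1 \<noteq> 0" using punit_iff[THEN iffD1, OF assms(1)] by auto
  have nu: "\<not> p dvd u 1" using not_dvd_level[OF u] by simp
  have key: "(u 1 * x 1) mod p \<noteq> 0" if "x \<in> padic p" "x 1 \<noteq> 0" for x
  proof -
    have "\<not> p dvd x 1" using not_dvd_level[OF that] by simp
    then have "\<not> p dvd u 1 * x 1" using nu prime_p prime_dvd_mult_iff by blast
    then show ?thesis by (simp add: dvd_eq_mod_eq_0)
  qed
  have key2: "(u 1 * a 1) mod p \<noteq> (u 1 * d 1) mod p" if "a 1 \<noteq> d 1"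
  proof
    assume "(u 1 * a 1) mod p = (u 1 * d 1) mod p"
    then have "p dvd u 1 * (a 1 - d 1)" by (simp add: mod_eq_dvd_iff right_diff_distrib)
    then have "p dvd a 1 - d 1" using nu prime_p prime_dvd_mult_iff by blast
    then show False using that mod_p_diff[of "a 1" "d 1"] padic_1_range m by (auto simp: dvd_eq_mod_eq_0)
  qed
  have e: "pmul p u x 1 = (u 1 * x 1) mod p" for x by simp
  consider (b) "b 1 \<noteq> 0" | (c) "c 1 \<noteq> 0" | (ad) "a 1 \<noteq> d 1" using assms(3) X by auto
  then show ?thesis
  proof cases
    case b then show ?thesis unfolding X using key[OF m(2)] by (simp only: msmul.simps nsc.simps e) simp
  next
    case c then show ?thesis unfolding X using key[OF m(3)] by (simp only: msmul.simps nsc.simps e) simp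
  next
    case ad then show ?thesis unfolding X using key2 by (simp only: msmul.simps nsc.simps e) simp
  qed
qed

lemma traceless_nsc: assumes "mcarrier p X" "prim X" "mtr X = pzero p" shows "nsc X"
proof (rule ccontr)
  assume n: "\<not> nsc X"
  obtain a b c d where X: "X = (a,b,c,d)" by (cases X rule: prod_cases4)
  have m: "a \<in> padic p" "d \<in> padic p" using assms(1) X by auto
  have bc: "b 1 = 0" "c 1 = 0" "a 1 = d 1" using n X by auto
  have "padd p a d 1 = 0" using assms(3) X by simp
  then have "(a 1 + a 1) mod p = 0" using bc by simp
  then have "p dvd a 1 + a 1" by (simp only: dvd_eq_mod_eq_0)
  moreover have "a 1 + a 1 = 2 * a 1" by simp
  ultimately have "p dvd 2 * a 1" by simp
  then have "p dvd a 1" using not_dvd_2 prime_p prime_dvd_mult_iff by blast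
  then have "a 1 mod p = 0" by (simp only: dvd_eq_mod_eq_0)
  then have "a 1 = 0" using padic_mod1[OF m(1)] by simp
  then show False using assms(2) X bc by auto
qed

end


context pctx begin

lemma pneg_zero[simp]: "pneg (pzero p) = pzero p" by (rule ext) simp
lemma psub_zero[simp]: "psub (pzero p) (pzero p) = pzero p" by (rule ext) simp
lemma pneg_pneg: "x \<in> padic p \<Longrightarrow> pneg (pneg x) = x" by (rule ext) (simp add: mod_simps)

lemma mpow_car[simp]: "mcarrier p A \<Longrightarrow> mcarrier p (mpow p A k)"
  by (induction k) simp_all

lemma madd_zero_right: "mcarrier p X \<Longrightarrow> madd p X (pzero p, pzero p, pzero p, pzero p) = X"
  by (cases X rule: prod_cases4) simp

lemma nil_of_trdet: assumes "mcarrier p A" "mtr A = pzero p" "mdet A = pzero p" shows "mnilpotent p A"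
proof -
  have "mpow p A (Suc (Suc 0)) = mmul p A A" using assms(1) by simp
  also have "\<dots> = mzero p" using CH[of A] assms by (cases A rule: prod_cases4) (simp add: mzero_def mone_def)
  finally show ?thesis unfolding mnilpotent_def by blast
qed

lemma mdet_zero: "mdet (mzero p) = pzero p" by (simp add: mzero_def)

lemma trdet_of_nil: assumes A: "mcarrier p A" and nil: "mnilpotent p A"
  shows "mtr A = pzero p \<and> mdet A = pzero p"
proof -
  obtain k where k: "mpow p A k = mzero p" using nil unfolding mnilpotent_def by blast
  have d: "mdet A = pzero p"
  proof (rule ccontr)
    assume nz: "mdet A \<noteq> pzero p"
    have "mdet (mpow p A j) \<noteq> pzero p" for j
    proof (induction j)
      case 0 then show ?case using pone_ne_pzero by (simp only: mpow.simps mdet_one) simp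
    next
      case (Suc j)
      have e: "mdet (mpow p A (Suc j)) = pmul p (mdet (mpow p A j)) (mdet A)" by (simp add: mdet_mult)
      show ?case
      proof
        assume "mdet (mpow p A (Suc j)) = pzero p"
        then have "pmul p (mdet (mpow p A j)) (mdet A) = pzero p" using e by simp
        then show False using domain[OF mdet_mem[OF mpow_car[OF A]] mdet_mem[OF A]] Suc.IH nz by blast
      qed
    qed
    then show False using k mdet_zero by metis
  qed
  have t: "mtr A = pzero p"
  proof (rule ccontr)
    assume tz: "mtr A \<noteq> pzero p"
    have AA: "mmul p A A = msmul p (mtr A) A"
      using CH[of A] d A madd_zero_right[of "msmul p (mtr A) A"] by (simp add: mone_def)
    have "\<exists>c. c \<in> padic p \<and> c \<noteq> pzero p \<and> mpow p A (Suc j) = msmul p c A" for j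
    proof (induction j)
      case 0 then show ?case using A pone_ne_pzero by (intro exI[of _ "pone p"]) (simp del: ev)
    next
      case (Suc j)
      then obtain c where c: "c \<in> padic p" "c \<noteq> pzero p" "mpow p A (Suc j) = msmul p c A" by blast
      have "mpow p A (Suc (Suc j)) = msmul p (pmul p c (mtr A)) A"
        using c AA by (simp add: mmul_smul_left msmul_msmul)
      moreover have "pmul p c (mtr A) \<noteq> pzero p" using domain[OF c(1) mtr_mem[OF A]] c(2) tz by blast
      moreover have "pmul p c (mtr A) \<in> padic p" using c A by simp
      ultimately show ?case by blast
    qed
    moreover have "k \<noteq> 0" using k pone_ne_pzero by (auto simp: mone_def mzero_def)
    ultimately obtain c where c: "c \<in> padic p" "c \<noteq> pzero p" "mzero p = msmul p c A"
      using k by (metis not0_implies_Suc)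
    obtain a b cc dd where Ad: "A = (a,b,cc,dd)" by (cases A rule: prod_cases4)
    have "pmul p c a = pzero p" "pmul p c dd = pzero p" using c(3) unfolding Ad mzero_def by (auto simp del: ev)
    moreover have "a \<in> padic p" "dd \<in> padic p" using A Ad by auto
    ultimately have "a = pzero p" "dd = pzero p" using domain c(1,2) by blast+
    then have "mtr A = pzero p" using Ad by simp
    then show False using tz by simp
  qed
  show ?thesis using t d by simp
qed

lemma sck_tr0: assumes "mcarrier p X" "sck 1 X" "mtr X 1 = 0" shows "lvl0 1 X"
proof -
  obtain a b c d where X: "X = (a,b,c,d)" by (cases X rule: prod_cases4)
  have m: "a \<in> padic p" "d \<in> padic p" using assms(1) X by auto
  have bc: "b 1 = 0" "c 1 = 0" "a 1 = d 1" using assms(2) X by auto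
  have "padd p a d 1 = 0" using assms(3) X by simp
  then have "(a 1 + a 1) mod p = 0" using bc by simp
  then have "p dvd a 1 + a 1" by (simp only: dvd_eq_mod_eq_0)
  moreover have "a 1 + a 1 = 2 * a 1" by simp
  ultimately have "p dvd 2 * a 1" by simp
  then have "p dvd a 1" using not_dvd_2 prime_p prime_dvd_mult_iff by blast
  then have "a 1 mod p = 0" by (simp only: dvd_eq_mod_eq_0)
  then have "a 1 = 0" using padic_mod1[OF m(1)] by simp
  then show ?thesis using X bc by simp
qed

lemma nsc_iff: "nsc X \<longleftrightarrow> \<not> sck 1 X" by (cases X rule: prod_cases4) auto

lemma prim_nlvl1: "prim X \<Longrightarrow> \<not> lvl0 1 X" by (cases X rule: prod_cases4) auto

lemma traceless_nsc': assumes "mcarrier p X" "prim X" "mtr X = pzero p" shows "nsc X"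
proof -
  have "mtr X 1 = 0" using assms(3) by simp
  then show ?thesis using sck_tr0[OF assms(1)] prim_nlvl1[OF assms(2)] nsc_iff by blast
qed

lemma scal_tr: assumes "mcarrier p X" "prim X" "sck 1 X" shows "mtr X 1 \<noteq> 0"
  using sck_tr0[OF assms(1,3)] prim_nlvl1[OF assms(2)] by blast

lemma ident1: "msmul p u (mmul p (mmul p Binv (msmul p c A0)) B) = msmul p c (mmul p (mmul p Binv (msmul p u A0)) B)"
  by (simp add: mmul_smul_left mmul_smul_right msmul_msmul pmul_comm)

lemma ident2: "mmul p (mmul p Binv (madd p X Y)) B = madd p (mmul p (mmul p Binv X) B) (mmul p (mmul p Binv Y) B)"
  by (cases X rule: prod_cases4, cases Y rule: prod_cases4, cases B rule: prod_cases4, cases Binv rule: prod_cases4,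
     simp only: zs; intro conjI allI; rule arg_cong[where f="\<lambda>t. t mod _"]; simp add: algebra_simps)

lemma mtr_add: "mtr (madd p X Y) = padd p (mtr X) (mtr Y)"
  by (cases X rule: prod_cases4, cases Y rule: prod_cases4,
     simp only: zs; intro conjI allI; rule arg_cong[where f="\<lambda>t. t mod _"]; simp add: algebra_simps)

lemma madd_mone_M: "mcarrier p X \<Longrightarrow> madd p (mone p) (madd p X (msmul p (pneg (pone p)) (mone p))) = X"
  by (cases X rule: prod_cases4) (simp only: zs mcar, simp)

lemma mtr_M: "mtr X = padd p (pone p) (pone p) \<Longrightarrow> mtr (madd p X (msmul p (pneg (pone p)) (mone p))) = pzero p"
  by (simp add: mtr_add mtr_smul, rule ext, simp add: mone_def mod_simps)

lemma sck_M: "sck 1 X \<Longrightarrow> sck 1 (madd p (msmul p u X) (msmul p c (mone p)))"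
  by (cases X rule: prod_cases4) (simp add: mone_def mod_simps)

end


context pctx begin

lemma core_1: "mone p \<in> core p \<rho>" unfolding core_def by blast
lemma core_2: "1 \<le> r \<Longrightarrow> d \<in> padic p \<Longrightarrow> madd p (mone p) (msmul p (ppow p r) (pzero p, d, pone p, pzero p)) \<in> core p \<rho>"
  unfolding core_def by blast
lemma core_3: "d \<in> padic p \<Longrightarrow> (pzero p, d, pone p, ppow p r) \<in> core p \<rho>" unfolding core_def by blast
lemma core_4: "(pzero p, ppow p r, pone p, pzero p) \<in> core p \<rho>" unfolding core_def by blast
lemma core_5: "(pzero p, pmul p \<rho> (ppow p r), pone p, pzero p) \<in> core p \<rho>" unfolding core_def by blast

lemma cycform: assumes "mcarrier p A0" "nsc A0" "punit p u"
  shows "\<exists>B Binv. mcarrier p B \<and> mcarrier p Binv \<and> mmul p B Binv = mone p \<and> mmul p Binv B = mone p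
    \<and> mmul p (mmul p Binv (msmul p u A0)) B = comp (msmul p u A0)"
proof -
  have c: "mcarrier p (msmul p u A0)" using assms punit_mem by simp
  have n: "nsc (msmul p u A0)" using nsc_smul[OF assms(3,1,2)] .
  obtain v1 v2 where v: "v1 \<in> padic p" "v2 \<in> padic p" "punit p (mdet (Bof (msmul p u A0) v1 v2))"
    using choose_v[OF c n] by blast
  show ?thesis using cyc[OF c v] .
qed

lemma QR_cong: "[a = b] (mod p) \<Longrightarrow> QuadRes p a = QuadRes p b"
  unfolding QuadRes_def by (meson cong_sym cong_trans)

lemma comp_smul: "comp (msmul p u X) = (pzero p, pneg (pmul p (pmul p u u) (mdet X)), pone p, pmul p u (mtr X))"
  by (simp add: mdet_smul mtr_smul)

lemma pneg_pmul: "pneg (pmul p k x) = pmul p k (pneg x)"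
  by (rule ext) (simp add: mod_simps)

lemma find_u: assumes rho: "punit p \<rho>" "\<not> QuadRes p (\<rho> 1)" and w: "punit p w"
  shows "\<exists>u e. punit p u \<and> e \<in> {pone p, \<rho>} \<and> pmul p (pmul p u u) w = e"
proof -
  have wm: "w \<in> padic p" "w 1 \<noteq> 0" using punit_iff[THEN iffD1, OF w] by auto
  have rm: "\<rho> \<in> padic p" "\<rho> 1 \<noteq> 0" using punit_iff[THEN iffD1, OF rho(1)] by auto
  show ?thesis
  proof (cases "QuadRes p (w 1)")
    case True
    obtain y where y: "y \<in> padic p" "pmul p y y = w" using sqrt_exists[OF wm True] by blast
    have "w 1 = (y 1 * y 1) mod p" using fun_cong[OF y(2)[symmetric], of 1] by simp
    then have "y 1 \<noteq> 0" using wm by auto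
    then have yu: "punit p y" using y punit_iff by simp
    obtain u where u: "punit p u" "pmul p y u = pone p" "pmul p u y = pone p" using unit_inv[OF yu] by blast
    have "pmul p (pmul p u u) w = pmul p (pmul p u y) (pmul p u y)" using y(2)[symmetric]
      by (simp add: pmul_assoc pmul_comm pmul_lcomm)
    also have "\<dots> = pone p" using u by simp
    finally show ?thesis using u(1) by blast
  next
    case False
    obtain wi where wi: "punit p wi" "pmul p w wi = pone p" "pmul p wi w = pone p" using unit_inv[OF w] by blast
    have wim: "wi \<in> padic p" "wi 1 \<noteq> 0" using punit_iff[THEN iffD1, OF wi(1)] by auto
    have c1: "[w 1 * wi 1 = 1] (mod p)" using fun_cong[OF wi(2), of 1] by (simp add: cong_def)
    have nwi: "\<not> QuadRes p (wi 1)"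
    proof
      assume "QuadRes p (wi 1)"
      then obtain t where t: "[t ^ 2 = wi 1] (mod p)" unfolding QuadRes_def by blast
      have "[(w 1 * t) ^ 2 = w 1 * (w 1 * wi 1)] (mod p)"
        using cong_scalar_left[OF t, of "w 1 * w 1"] by (simp add: power2_eq_square ac_simps)
      moreover have "[w 1 * (w 1 * wi 1) = w 1 * 1] (mod p)" using cong_scalar_left[OF c1] .
      ultimately have "[(w 1 * t) ^ 2 = w 1] (mod p)" using cong_trans by fastforce
      then show False using False unfolding QuadRes_def by blast
    qed
    define z where "z = pmul p \<rho> wi"
    have zu: "punit p z" unfolding z_def using punit_mul[OF rho(1) wi(1)] .
    have zm: "z \<in> padic p" "z 1 \<noteq> 0" using punit_iff[THEN iffD1, OF zu] by auto
    have "QuadRes p (\<rho> 1 * wi 1)"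
      using nonres_mult[OF rho(2) nwi not_dvd_level[OF rm, of 1] not_dvd_level[OF wim, of 1]] by simp
    moreover have "[\<rho> 1 * wi 1 = z 1] (mod p)" unfolding z_def by (simp add: cong_def)
    ultimately have "QuadRes p (z 1)" using QR_cong by blast
    then obtain y where y: "y \<in> padic p" "pmul p y y = z" using sqrt_exists[OF zm] by blast
    have "z 1 = (y 1 * y 1) mod p" using fun_cong[OF y(2)[symmetric], of 1] by simp
    then have "y 1 \<noteq> 0" using zm by auto
    then have yu: "punit p y" using y punit_iff by simp
    have "pmul p (pmul p y y) w = pmul p \<rho> (pmul p wi w)" using y(2) unfolding z_def
      by (simp add: pmul_assoc)
    also have "\<dots> = \<rho>" using wi rm by simp
    finally show ?thesis using yu by blast
  qed
qed


lemma exist_core: assumes rho: "punit p \<rho>" "\<not> QuadRes p (\<rho> 1)"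
  and A0: "mcarrier p A0" "prim A0" and nn: "\<not> (mtr A0 = pzero p \<and> mdet A0 = pzero p)"
  shows "\<exists>u B Binv. punit p u \<and> mcarrier p B \<and> mcarrier p Binv \<and> mmul p B Binv = mone p
     \<and> mmul p Binv B = mone p \<and> mmul p (mmul p Binv (msmul p u A0)) B \<in> core p \<rho>"
proof (cases "nsc A0")
  case True
  have tm: "mtr A0 \<in> padic p" "mdet A0 \<in> padic p" using A0 by simp_all
  show ?thesis
  proof (cases "mtr A0 = pzero p")
    case False
    obtain r w where rw: "punit p w" "mtr A0 = pmul p (ppow p r) w" using val_factor[OF tm(1) False] by blast
    obtain u where u: "punit p u" "pmul p w u = pone p" "pmul p u w = pone p" using unit_inv[OF rw(1)] by blast
    obtain B Binv where B: "mcarrier p B" "mcarrier p Binv" "mmul p B Binv = mone p" "mmul p Binv B = mone p"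
      "mmul p (mmul p Binv (msmul p u A0)) B = comp (msmul p u A0)" using cycform[OF A0(1) True u(1)] by blast
    have "pmul p u (mtr A0) = pmul p (ppow p r) (pmul p u w)" unfolding rw(2) by (rule pmul_lcomm)
    then have "pmul p u (mtr A0) = ppow p r" using u(3) by simp
    then have "comp (msmul p u A0) = (pzero p, pneg (pmul p (pmul p u u) (mdet A0)), pone p, ppow p r)"
      unfolding comp_smul by simp
    moreover have "pneg (pmul p (pmul p u u) (mdet A0)) \<in> padic p" using tm punit_mem[OF u(1)] by simp
    ultimately have "comp (msmul p u A0) \<in> core p \<rho>" using core_3 by simp
    then show ?thesis using B u(1) by (intro exI[of _ u] exI[of _ B] exI[of _ Binv]) simp
  next
    case tr0: True
    then have d0: "mdet A0 \<noteq> pzero p" using nn by simp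
    have "pneg (mdet A0) \<noteq> pzero p"
    proof
      assume "pneg (mdet A0) = pzero p"
      then have "pneg (pneg (mdet A0)) = pzero p" by simp
      then show False using pneg_pneg[OF tm(2)] d0 by simp
    qed
    then obtain r w where rw: "punit p w" "pneg (mdet A0) = pmul p (ppow p r) w"
      using val_factor[OF pneg_mem[OF tm(2)]] by blast
    obtain u e where ue: "punit p u" "e \<in> {pone p, \<rho>}" "pmul p (pmul p u u) w = e"
      using find_u[OF rho rw(1)] by blast
    have um: "u \<in> padic p" using punit_mem[OF ue(1)] .
    obtain B Binv where B: "mcarrier p B" "mcarrier p Binv" "mmul p B Binv = mone p" "mmul p Binv B = mone p"
      "mmul p (mmul p Binv (msmul p u A0)) B = comp (msmul p u A0)" using cycform[OF A0(1) True ue(1)] by blast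
    have "pneg (pmul p (pmul p u u) (mdet A0)) = pmul p (pmul p u u) (pneg (mdet A0))" by (rule pneg_pmul)
    also have "\<dots> = pmul p (ppow p r) e" unfolding rw(2) ue(3)[symmetric] by (rule pmul_lcomm)
    finally have e1: "comp (msmul p u A0) = (pzero p, pmul p (ppow p r) e, pone p, pzero p)"
      using tr0 unfolding comp_smul by simp
    have "comp (msmul p u A0) \<in> core p \<rho>"
    proof (cases "e = pone p")
      case True then show ?thesis using e1 core_4 by simp
    next
      case False then have "e = \<rho>" using ue(2) by simp
      then show ?thesis using e1 core_5 by (simp add: pmul_comm)
    qed
    then show ?thesis using B ue(1) by (intro exI[of _ u] exI[of _ B] exI[of _ Binv]) simp
  qed
next
  case False
  then have sc: "sck 1 A0" using nsc_iff by simp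
  have tm: "mtr A0 \<in> padic p" using A0 by simp
  have tu: "punit p (mtr A0)" using scal_tr[OF A0 sc] tm punit_iff by simp
  obtain ti where ti: "punit p ti" "pmul p (mtr A0) ti = pone p" "pmul p ti (mtr A0) = pone p"
    using unit_inv[OF tu] by blast
  define two where "two = padd p (pone p) (pone p)"
  have two: "punit p two" "two \<in> padic p" unfolding two_def using two_unit by simp_all
  define u where "u = pmul p two ti"
  have uu: "punit p u" unfolding u_def using punit_mul[OF two(1) ti(1)] .
  have um: "u \<in> padic p" using punit_mem[OF uu] .
  define A1 where "A1 = msmul p u A0"
  have A1c: "mcarrier p A1" unfolding A1_def using A0 um by simp
  have trA1: "mtr A1 = two" unfolding A1_def u_def using ti(3) two by (simp add: mtr_smul pmul_assoc)
  define M where "M = madd p A1 (msmul p (pneg (pone p)) (mone p))"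
  have Mc: "mcarrier p M" unfolding M_def using A1c by simp
  have trM: "mtr M = pzero p" unfolding M_def using mtr_M trA1 two_def by simp
  have scM: "sck 1 M" unfolding M_def A1_def using sck_M[OF sc] .
  have l1: "lvl0 1 M" using sck_tr0[OF Mc scM] trM by simp
  have A1M: "A1 = madd p (mone p) M" unfolding M_def using madd_mone_M[OF A1c] by simp
  show ?thesis
  proof (cases "M = mzero p")
    case True
    then have "A1 = mone p" using A1M by (simp add: mone_def mzero_def)
    then have "mmul p (mmul p (mone p) (msmul p u A0)) (mone p) \<in> core p \<rho>" using core_1 A1_def by simp
    then show ?thesis using uu by (intro exI[of _ u] exI[of _ "mone p"] exI[of _ "mone p"]) simp
  next
    case False
    obtain k M1 where M1: "mcarrier p M1" "prim M1" "M = msmul p (ppow p k) M1" "1 \<le> k"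
      using mat_content[OF Mc False] l1 by blast
    have "pmul p (ppow p k) (mtr M1) = pmul p (ppow p k) (pzero p)" using trM M1(3) by (simp add: mtr_smul)
    then have tr1: "mtr M1 = pzero p" using ppow_cancel M1(1) by simp
    have n1: "nsc M1" using traceless_nsc'[OF M1(1,2) tr1] .
    obtain B Binv where B: "mcarrier p B" "mcarrier p Binv" "mmul p B Binv = mone p" "mmul p Binv B = mone p"
      "mmul p (mmul p Binv (msmul p (pone p) M1)) B = comp (msmul p (pone p) M1)"
      using cycform[OF M1(1) n1 pone_unit] by blast
    have cB: "mmul p (mmul p Binv M1) B = (pzero p, pneg (mdet M1), pone p, pzero p)"
      using B(5) M1(1) tr1 by simp
    have "mmul p (mmul p Binv A1) B = madd p (mone p) (msmul p (ppow p k) (mmul p (mmul p Binv M1) B))"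
      unfolding A1M ident2 M1(3) using B by (simp add: mmul_smul_left mmul_smul_right mmul_assoc)
    also have "\<dots> \<in> core p \<rho>" unfolding cB using core_2[OF M1(4)] M1(1) by simp
    finally show ?thesis using uu B unfolding A1_def
      by (intro exI[of _ u] exI[of _ B] exI[of _ Binv]) simp
  qed
qed

end


context pctx begin

lemma nil_exist: assumes A: "mcarrier p A" "mnilpotent p A" shows "\<exists>C. C \<in> nil_normal p \<and> msim p A C"
proof (cases "A = mzero p")
  case True
  have "msim p A (mzero p)"
    by (rule msimI[OF pone_unit mone_car mone_car]) (simp_all add: True)
  moreover have "mzero p \<in> nil_normal p" unfolding nil_normal_def by blast
  ultimately show ?thesis by blast
next
  case False
  obtain s A0 where s: "mcarrier p A0" "prim A0" "A = msmul p (ppow p s) A0"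
    using mat_content[OF A(1) False] by blast
  have td: "mtr A = pzero p" "mdet A = pzero p" using trdet_of_nil[OF A] by auto
  have "pmul p (ppow p s) (mtr A0) = pmul p (ppow p s) (pzero p)" using td(1) s(3) by (simp add: mtr_smul)
  then have t0: "mtr A0 = pzero p" using ppow_cancel s(1) by simp
  have "pmul p (pmul p (ppow p s) (ppow p s)) (mdet A0) = pzero p" using td(2) s(3) by (simp add: mdet_smul)
  moreover have "pmul p (ppow p s) (ppow p s) \<noteq> pzero p"
    using ppow_unit_nz[OF pone_unit, of "s + s"] by (simp add: ppow_add)
  ultimately have d0: "mdet A0 = pzero p" using domain[of "pmul p (ppow p s) (ppow p s)" "mdet A0"] s(1) by auto
  have n: "nsc A0" using traceless_nsc'[OF s(1,2) t0] .
  obtain B Binv where B: "mcarrier p B" "mcarrier p Binv" "mmul p B Binv = mone p" "mmul p Binv B = mone p"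
    "mmul p (mmul p Binv (msmul p (pone p) A0)) B = comp (msmul p (pone p) A0)"
    using cycform[OF s(1) n pone_unit] by blast
  have cN: "comp (msmul p (pone p) A0) = (pzero p, pzero p, pone p, pzero p)" using s(1) t0 d0 by simp
  define C where "C = msmul p (ppow p s) (pzero p, pzero p, pone p, pzero p)"
  have "C = msmul p (pone p) (mmul p (mmul p Binv A) B)"
    unfolding C_def s(3) ident1[of "pone p" Binv "ppow p s" A0 B] B(5) cN ..
  then have "msim p A C" using msimI[OF pone_unit B(1-4)] by blast
  moreover have "C \<in> nil_normal p" unfolding nil_normal_def C_def by blast
  ultimately show ?thesis by blast
qed

lemma nonnil_exist: assumes rho: "punit p \<rho>" "\<not> QuadRes p (\<rho> 1)"
  and A: "mcarrier p A" "\<not> mnilpotent p A" shows "\<exists>C. C \<in> nonnil_normal p \<rho> \<and> msim p A C"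
proof -
  have "mnilpotent p (mzero p)" using nil_of_trdet[of "mzero p"] by (simp add: mzero_def)
  then have nz: "A \<noteq> mzero p" using A by blast
  obtain s A0 where s: "mcarrier p A0" "prim A0" "A = msmul p (ppow p s) A0"
    using mat_content[OF A(1) nz] by blast
  have nn: "\<not> (mtr A0 = pzero p \<and> mdet A0 = pzero p)"
  proof
    assume h: "mtr A0 = pzero p \<and> mdet A0 = pzero p"
    have "mtr A = pzero p" "mdet A = pzero p" using h s(3) by (simp_all add: mtr_smul mdet_smul)
    then show False using nil_of_trdet[OF A(1)] A(2) by blast
  qed
  obtain u B Binv where B: "punit p u" "mcarrier p B" "mcarrier p Binv" "mmul p B Binv = mone p"
    "mmul p Binv B = mone p" "mmul p (mmul p Binv (msmul p u A0)) B \<in> core p \<rho>"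
    using exist_core[OF rho s(1,2) nn] by blast
  define C where "C = msmul p (ppow p s) (mmul p (mmul p Binv (msmul p u A0)) B)"
  have "C = msmul p u (mmul p (mmul p Binv A) B)"
    unfolding C_def s(3) ident1[of u Binv "ppow p s" A0 B] ..
  then have "msim p A C" using msimI[OF B(1-5)] by blast
  moreover have "C \<in> nonnil_normal p \<rho>" unfolding nonnil_normal_def C_def using B(6) by blast
  ultimately show ?thesis by blast
qed

end

theorem mainTheorem19:
  fixes p :: int
  assumes "prime p" and "odd p"
  shows "(\<forall>A. mcarrier p A \<and> mnilpotent p A \<longrightarrow> (\<exists>!C. C \<in> nil_normal p \<and> msim p A C))
       \<and> (\<forall>\<rho>. punit p \<rho> \<and> \<not> QuadRes p (\<rho> 1) \<longrightarrow>
            (\<forall>A. mcarrier p A \<and> \<not> mnilpotent p A \<longrightarrow> (\<exists>!C. C \<in> nonnil_normal p \<rho> \<and> msim p A C)))"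
proof -
  interpret pctx p using assms by unfold_locales
  show ?thesis
  proof (intro conjI allI impI)
    fix A assume h: "mcarrier p A \<and> mnilpotent p A"
    show "\<exists>!C. C \<in> nil_normal p \<and> msim p A C"
      using nil_exist[of A] nil_uniq[of A] h by (intro ex_ex1I) blast+
  next
    fix \<rho> A assume r: "punit p \<rho> \<and> \<not> QuadRes p (\<rho> 1)" and h: "mcarrier p A \<and> \<not> mnilpotent p A"
    show "\<exists>!C. C \<in> nonnil_normal p \<rho> \<and> msim p A C"
      using nonnil_exist[of \<rho> A] nonnil_uniq[of \<rho> A] r h by (intro ex_ex1I) blast+
  qed
qed


end
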